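(* Let $k\ge 3$ be an integer and let $\Omega\subset\mathbb{R}^4$ be a domain with smooth boundary and outer unit normal $\nu$. The boundary value problem for $\mathbb{C}^{2k}$-valued $u$: $\square_1^{(k)}u=f$ on $\Omega$, $D_0^{(k)*}(\nu)u|_{\partial\Omega}=0$, $D_1^{(k)*}(\nu)D_1^{(k)}u|_{\partial\Omega}=0$, is regular (satisfies the Shapiro–Lopatinskii condition).
   Context: Coordinates $x=(x_0,\dots,x_3)$; $\partial_{z_0}=\partial_{x_0}-i\partial_{x_1}$, $\partial_{\bar z_0}=\partial_{x_0}+i\partial_{x_1}$, $\partial_{z_1}=\partial_{x_2}-i\partial_{x_3}$, $\partial_{\bar z_1}=\partial_{x_2}+i\partial_{x_3}$. $D_0^{(k)}(\phi_0,\dots,\phi_k)=(\psi_0,\dots,\psi_{2k-1})$ with $\psi_{2j}=-\partial_{\bar z_1}\phi_j-\partial_{\bar z_0}\phi_{j+1}$, $\psi_{2j+1}=\partial_{z_0}\phi_j-\partial_{z_1}\phi_{j+1}$ ($0\le j\le k-1$); $(D_1^{(k)}\psi)_j=-\partial_{z_0}\psi_{2j}-\partial_{\bar z_1}\psi_{2j+1}+\partial_{z_1}\psi_{2j+2}-\partial_{\bar z_0}\psi_{2j+3}$ ($0\le j\le k-2$). For $D=\sum_jA_j\partial_{x_j}$ with constant matrices, $D^*=-\sum_j\overline{A_j}^{\,t}\partial_{x_j}$ and $D(\nu)=\sum_jA_j\nu_j$. $\square_1^{(k)}=D_0^{(k)}D_0^{(k)*}+D_1^{(k)*}D_1^{(k)}$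 (an elliptic second-order operator). Regularity (Shapiro–Lopatinskii): for each $x\in\partial\Omega$ and nonzero $\xi\in\mathbb{R}^4$ with $\xi\perp\nu_x$, the only bounded solution $u\in C^\infty([0,\infty),\mathbb{C}^{2k})$ of $\square_1^{(k)}(i\xi+n\partial_t)u(t)=0$ with $D_0^{(k)*}(n)u(0)=0$ and $D_1^{(k)*}(n)D_1^{(k)}(i\xi+n\partial_t)u(0)=0$ is $u=0$, where $n$ is the inner unit normal at $x$ and $Q(i\xi+n\partial_t)$ means replacing each $\partial_{x_l}$ by $i\xi_l+n_l\partial_t$. *)

theory Defs
  imports "HOL-Analysis.Analysis"
begin

definition cmp :: "real^4 \<Rightarrow> nat \<Rightarrow> real" where
  "cmp x j = x $ (of_nat j :: 4)"

text \<open>A first-order constant-coefficient operator  D = sum_j A_j d/dx_j  (j<4) is given by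
  its coefficient family  A j r c  (row r, column c of the matrix A_j).
  Vector-valued functions are  nat => (real => complex)  (component index first).
  The partial derivatives are supplied as a family  P :: nat => (real => complex) => (real => complex),
  P l standing for  d/dx_l.\<close>

type_synonym coeffs = "nat \<Rightarrow> nat \<Rightarrow> nat \<Rightarrow> complex"

definition apply_op :: "coeffs \<Rightarrow> nat \<Rightarrow> (nat \<Rightarrow> (real \<Rightarrow> complex) \<Rightarrow> (real \<Rightarrow> complex))
    \<Rightarrow> (nat \<Rightarrow> real \<Rightarrow> complex) \<Rightarrow> (nat \<Rightarrow> real \<Rightarrow> complex)" where
  "apply_op A p P u = (\<lambda>r t. \<Sum>j<4. \<Sum>c<p. A j r c * P j (u c) t)"

definition adj :: "coeffs \<Rightarrow> coeffs" where
  "adj A = (\<lambda>j r c. - cnj (A j c r))"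

definition symb :: "coeffs \<Rightarrow> real^4 \<Rightarrow> nat \<Rightarrow> nat \<Rightarrow> complex" where
  "symb A v = (\<lambda>r c. \<Sum>j<4. A j r c * complex_of_real (cmp v j))"

text \<open>Coefficients of d/dz0, d/dzbar0, d/dz1, d/dzbar1 w.r.t. d/dx0..d/dx3.\<close>
definition dz0 :: "nat \<Rightarrow> complex" where
  "dz0 j = (if j = 0 then 1 else if j = 1 then - \<i> else 0)"
definition dzb0 :: "nat \<Rightarrow> complex" where
  "dzb0 j = (if j = 0 then 1 else if j = 1 then \<i> else 0)"
definition dz1 :: "nat \<Rightarrow> complex" where
  "dz1 j = (if j = 2 then 1 else if j = 3 then - \<i> else 0)"
definition dzb1 :: "nat \<Rightarrow> complex" where
  "dzb1 j = (if j = 2 then 1 else if j = 3 then \<i> else 0)"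

text \<open>D_0^{(k)} : (phi_0..phi_k) |-> (psi_0..psi_{2k-1}),
  psi_{2m} = - dzbar1 phi_m - dzbar0 phi_{m+1},  psi_{2m+1} = dz0 phi_m - dz1 phi_{m+1}.\<close>
definition D0 :: "nat \<Rightarrow> coeffs" where
  "D0 k = (\<lambda>j r c.
     if r < 2 * k then
       (if even r then
          (if c = r div 2 then - dzb1 j else if c = r div 2 + 1 then - dzb0 j else 0)
        else
          (if c = r div 2 then dz0 j else if c = r div 2 + 1 then - dz1 j else 0))
     else 0)"

text \<open>D_1^{(k)} : (psi_0..psi_{2k-1}) |-> ((D_1 psi)_0 .. (D_1 psi)_{k-2}),
  (D_1 psi)_m = - dz0 psi_{2m} - dzbar1 psi_{2m+1} + dz1 psi_{2m+2} - dzbar0 psi_{2m+3}.\<close>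
definition D1 :: "nat \<Rightarrow> coeffs" where
  "D1 k = (\<lambda>j r c.
     if r + 2 \<le> k then
       (if c = 2 * r then - dz0 j
        else if c = 2 * r + 1 then - dzb1 j
        else if c = 2 * r + 2 then dz1 j
        else if c = 2 * r + 3 then - dzb0 j
        else 0)
     else 0)"

definition box1 :: "nat \<Rightarrow> (nat \<Rightarrow> (real \<Rightarrow> complex) \<Rightarrow> (real \<Rightarrow> complex))
    \<Rightarrow> (nat \<Rightarrow> real \<Rightarrow> complex) \<Rightarrow> (nat \<Rightarrow> real \<Rightarrow> complex)" where
  "box1 k P u = (\<lambda>r t.
      apply_op (D0 k) (k + 1) P (apply_op (adj (D0 k)) (2 * k) P u) r t
    + apply_op (adj (D1 k)) (k - 1) P (apply_op (D1 k) (2 * k) P u) r t)"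

definition subst_deriv :: "real^4 \<Rightarrow> real^4 \<Rightarrow> nat \<Rightarrow> (real \<Rightarrow> complex) \<Rightarrow> (real \<Rightarrow> complex)" where
  "subst_deriv \<xi> n l f = (\<lambda>t. \<i> * complex_of_real (cmp \<xi> l) * f t
      + complex_of_real (cmp n l) * vector_derivative f (at t within {0..}))"

definition smooth_halfline :: "(real \<Rightarrow> complex) \<Rightarrow> bool" where
  "smooth_halfline f \<longleftrightarrow> (\<exists>F :: nat \<Rightarrow> real \<Rightarrow> complex.
      (\<forall>t\<ge>0. F 0 t = f t) \<and>
      (\<forall>m. \<forall>t\<ge>0. (F m has_vector_derivative F (Suc m) t) (at t within {0..})))"

text \<open>Shapiro--Lopatinskii regularity of the boundary problem
  box u = f, D_0^*(nu) u = 0, D_1^*(nu) D_1 u = 0 on the boundary, as in the paper: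
  n = - nu x is the inner unit normal.\<close>
definition SL_regular :: "nat \<Rightarrow> (real^4) set \<Rightarrow> (real^4 \<Rightarrow> real^4) \<Rightarrow> bool" where
  "SL_regular k \<Omega> \<nu> \<longleftrightarrow>
    (\<forall>x\<in>frontier \<Omega>. \<forall>\<xi>::real^4. \<xi> \<noteq> 0 \<and> \<xi> \<bullet> \<nu> x = 0 \<longrightarrow>
      (let n = - \<nu> x; P = subst_deriv \<xi> n in
       \<forall>u :: nat \<Rightarrow> real \<Rightarrow> complex.
         (\<forall>c<2*k. smooth_halfline (u c)) \<and>
         (\<forall>c<2*k. bounded (u c ` {0..})) \<and>
         (\<forall>r<2*k. \<forall>t\<ge>0. box1 k P u r t = 0) \<and>
         (\<forall>r<k+1. (\<Sum>c<2*k. symb (adj (D0 k)) n r c * u c 0) = 0) \<and>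
         (\<forall>r<2*k. (\<Sum>c<k-1. symb (adj (D1 k)) n r c * apply_op (D1 k) (2*k) P u c 0) = 0)
         \<longrightarrow> (\<forall>c<2*k. \<forall>t\<ge>0. u c t = 0)))"

end

theory Submission
  imports Defs
begin

lemma at_nonneg_not_bot: "(t::real) \<ge> 0 \<Longrightarrow> at t within {0..} \<noteq> bot"
proof -
  assume t: "t \<ge> 0"
  have "t islimpt {0..}"
    unfolding islimpt_approachable_real
  proof (intro allI impI)
    fix e :: real assume "e > 0"
    then show "\<exists>x'\<in>{0..}. x' \<noteq> t \<and> \<bar>x' - t\<bar> < e"
      using t by (intro bexI[of _ "t + e/2"]) auto
  qed
  then show ?thesis using trivial_limit_within by blast
qed

definition tower :: "(nat \<Rightarrow> real \<Rightarrow> complex) \<Rightarrow> bool" where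
  "tower G \<longleftrightarrow> (\<forall>i t. t \<ge> 0 \<longrightarrow> (G i has_vector_derivative G (Suc i) t) (at t within {0..}))"

lemma tower_lin:
  assumes "tower G" "tower H"
  shows "tower (\<lambda>i t. a * G i t + b * H i t)"
  using assms unfolding tower_def by (auto intro!: derivative_eq_intros)

lemma tower_shift: "tower G \<Longrightarrow> tower (\<lambda>i. G (Suc i))"
  unfolding tower_def by auto

lemma tower_zero:
  assumes "tower G" "\<And>t. t \<ge> 0 \<Longrightarrow> G 0 t = 0"
  shows "t \<ge> 0 \<Longrightarrow> G i t = 0"
proof (induction i arbitrary: t)
  case 0 then show ?case using assms(2) by simp
next
  case (Suc i)
  have d1: "(G i has_vector_derivative G (Suc i) t) (at t within {0..})"
    using assms(1) Suc.prems unfolding tower_def by auto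
  have d2: "(G i has_vector_derivative 0) (at t within {0..})"
    by (rule has_vector_derivative_transform[where f="\<lambda>_. 0"]) (use Suc in auto)
  show ?case using vector_derivative_unique_within[OF at_nonneg_not_bot[OF Suc.prems] d1 d2] .
qed

lemma tower_eq:
  assumes "tower G" "tower H" "\<And>t. t \<ge> 0 \<Longrightarrow> G 0 t = H 0 t"
  shows "t \<ge> 0 \<Longrightarrow> G i t = H i t"
  using tower_zero[OF tower_lin[OF assms(1,2), of 1 "-1"], where i=i and t=t] assms(3) by auto

lemma vd_eval:
  assumes "tower G" "\<And>t. t \<ge> 0 \<Longrightarrow> f t = G 0 t" "t \<ge> 0"
  shows "vector_derivative f (at t within {0..}) = G 1 t"
proof -
  have "(G 0 has_vector_derivative G 1 t) (at t within {0..})"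
    using assms(1,3) unfolding tower_def by auto
  then have "(f has_vector_derivative G 1 t) (at t within {0..})"
    by (rule has_vector_derivative_transform[rotated 2]) (use assms in auto)
  then show ?thesis by (rule vector_derivative_within[OF at_nonneg_not_bot[OF assms(3)]])
qed

lemma cmp_inner: "x \<bullet> y = (\<Sum>j<4. cmp x j * cmp y j)"
proof -
  have h4: "(4::4) = 0" by simp
  show ?thesis unfolding inner_vec_def sum_4 h4 by (simp add: cmp_def numeral_eq_Suc lessThan_Suc)
qed



definition Yc :: "(nat \<Rightarrow> complex) \<Rightarrow> (nat \<Rightarrow> nat \<Rightarrow> complex) \<Rightarrow> nat \<Rightarrow> complex" where
  "Yc cf X c = (\<Sum>j<4. cf j * X j c)"

lemma cnj_dz[simp]: "cnj (dz0 j) = dzb0 j" "cnj (dzb0 j) = dz0 j" "cnj (dz1 j) = dzb1 j" "cnj (dzb1 j) = dz1 j"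
  by (simp_all add: dz0_def dzb0_def dz1_def dzb1_def)

lemma sum_delta_cond: "(\<Sum>c<(N::nat). if c = a \<and> P then f c else 0) = (if P \<and> a < N then f a else (0::complex))"
proof (cases P)
  case True
  have "(\<Sum>c<N. if c = a \<and> P then f c else 0) = (\<Sum>c<N. if c = a then f c else 0)"
    using True by simp
  then show ?thesis using True by (simp add: sum.delta)
qed simp

lemma Yc_neg: "(\<Sum>j<4. - cf j * X j c) = - Yc cf X c" by (simp add: Yc_def sum_negf)

lemma C_D1:
  assumes "m + 2 \<le> k"
  shows "(\<Sum>c<2*k. \<Sum>j<4. D1 k j m c * X j c) =
     - Yc dz0 X (2*m) - Yc dzb1 X (2*m+1) + Yc dz1 X (2*m+2) - Yc dzb0 X (2*m+3)"
proof -
  have pt: "(\<Sum>j<4. D1 k j m c * X j c) =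
     (if c = 2*m \<and> True then - Yc dz0 X c else 0) + (if c = 2*m+1 \<and> True then - Yc dzb1 X c else 0)
   + (if c = 2*m+2 \<and> True then Yc dz1 X c else 0) + (if c = 2*m+3 \<and> True then - Yc dzb0 X c else 0)" for c
    using assms by (auto simp: D1_def Yc_def sum_negf)
  show ?thesis unfolding pt sum.distrib sum_delta_cond using assms by simp
qed

lemma C_adjD0:
  assumes "r \<le> k"
  shows "(\<Sum>c<2*k. \<Sum>j<4. adj (D0 k) j r c * X j c) =
     (if r < k then Yc dz1 X (2*r) - Yc dzb0 X (2*r+1) else 0)
   + (if 1 \<le> r then Yc dz0 X (2*r-2) + Yc dzb1 X (2*r-1) else 0)"
proof -
  have pt: "(\<Sum>j<4. adj (D0 k) j r c * X j c) =
     (if c = 2*r \<and> c < 2*k then Yc dz1 X c else 0) + (if c = 2*r+1 \<and> c < 2*k then - Yc dzb0 X c else 0)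
   + (if c = 2*r - 2 \<and> 1 \<le> r then Yc dz0 X c else 0) + (if c = 2*r-1 \<and> 1 \<le> r then Yc dzb1 X c else 0)"
    if c: "c < 2*k" for c
  proof (cases "even c")
    case True
    then obtain q where q: "c = 2*q" by blast
    have cf: "adj (D0 k) j r (2*q) = (if r = q then dz1 j else if r = q+1 then dz0 j else 0)" for j
      using c unfolding q by (auto simp: D0_def adj_def)
    have e: "(2*q = 2*r) = (q = r)" "(2*q = 2*r - 2 \<and> 1 \<le> r) = (r = q+1)"
      "(2*q = 2*r+1) = False" "(2*q = 2*r - 1 \<and> 1 \<le> r) = False" by arith+
    show ?thesis using c unfolding q cf e by (auto simp: Yc_def)
  next
    case False
    then obtain q where q: "c = 2*q+1" using oddE by blast
    have cf: "adj (D0 k) j r (2*q+1) = (if r = q then - dzb0 j else if r = q+1 then dzb1 j else 0)" for j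
      using c unfolding q by (auto simp: D0_def adj_def)
    have e: "(2*q+1 = 2*r) = False" "(2*q+1 = 2*r - 2 \<and> 1 \<le> r) = False"
      "(2*q+1 = 2*r+1) = (q = r)" "(2*q+1 = 2*r - 1 \<and> 1 \<le> r) = (r = q+1)" by arith+
    show ?thesis using c unfolding q cf e by (auto simp: Yc_def sum_negf)
  qed
  have "(\<Sum>c<2*k. \<Sum>j<4. adj (D0 k) j r c * X j c) = (\<Sum>c<2*k.
     (if c = 2*r \<and> c < 2*k then Yc dz1 X c else 0) + (if c = 2*r+1 \<and> c < 2*k then - Yc dzb0 X c else 0)
   + (if c = 2*r - 2 \<and> 1 \<le> r then Yc dz0 X c else 0) + (if c = 2*r-1 \<and> 1 \<le> r then Yc dzb1 X c else 0))"
    by (rule sum.cong) (auto simp: pt)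
  also have "\<dots> = (if r < k then Yc dz1 X (2*r) - Yc dzb0 X (2*r+1) else 0)
   + (if 1 \<le> r then Yc dz0 X (2*r-2) + Yc dzb1 X (2*r-1) else 0)"
    unfolding sum.distrib using assms by (auto simp: sum.delta)
  finally show ?thesis .
qed

lemma C_D0_even:
  assumes "m < k"
  shows "(\<Sum>c<k+1. \<Sum>j<4. D0 k j (2*m) c * X j c) = - Yc dzb1 X m - Yc dzb0 X (m+1)"
proof -
  have pt: "(\<Sum>j<4. D0 k j (2*m) c * X j c) =
     (if c = m \<and> True then - Yc dzb1 X c else 0) + (if c = m+1 \<and> True then - Yc dzb0 X c else 0)" for c
    using assms by (auto simp: D0_def Yc_def sum_negf)
  show ?thesis unfolding pt sum.distrib sum_delta_cond using assms by simp
qed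

lemma C_D0_odd:
  assumes "m < k"
  shows "(\<Sum>c<k+1. \<Sum>j<4. D0 k j (2*m+1) c * X j c) = Yc dz0 X m - Yc dz1 X (m+1)"
proof -
  have pt: "(\<Sum>j<4. D0 k j (2*m+1) c * X j c) =
     (if c = m \<and> True then Yc dz0 X c else 0) + (if c = m+1 \<and> True then - Yc dz1 X c else 0)" for c
    using assms by (auto simp: D0_def Yc_def sum_negf)
  show ?thesis unfolding pt sum.distrib sum_delta_cond using assms by simp
qed

lemma C_adjD1_even:
  assumes "m < k"
  shows "(\<Sum>q<k-1. \<Sum>j<4. adj (D1 k) j (2*m) q * X j q) =
    (if m + 2 \<le> k then Yc dzb0 X m else 0) - (if 1 \<le> m then Yc dzb1 X (m-1) else 0)" (is "_ = ?R")
proof -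
  have pt: "(\<Sum>j<4. adj (D1 k) j (2*m) q * X j q) =
     (if q = m \<and> True then Yc dzb0 X q else 0) + (if q = m - 1 \<and> 1 \<le> m then - Yc dzb1 X q else 0)"
    if "q < k - 1" for q
  proof -
    have cf: "adj (D1 k) j (2*m) q = (if q = m then dzb0 j else if q = m - 1 \<and> 1 \<le> m then - dzb1 j else 0)" for j
      using assms that by (auto simp: D1_def adj_def)
    show ?thesis unfolding cf using assms that by (auto simp: Yc_def sum_negf)
  qed
  have "(\<Sum>q<k-1. \<Sum>j<4. adj (D1 k) j (2*m) q * X j q) = (\<Sum>q<k-1.
     (if q = m \<and> True then Yc dzb0 X q else 0) + (if q = m - 1 \<and> 1 \<le> m then - Yc dzb1 X q else 0))"
    by (rule sum.cong[OF refl], rule pt) simp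
  also have "\<dots> = ?R" unfolding sum.distrib sum_delta_cond using assms by auto
  finally show ?thesis .
qed

lemma C_adjD1_odd:
  assumes "m < k"
  shows "(\<Sum>q<k-1. \<Sum>j<4. adj (D1 k) j (2*m+1) q * X j q) =
    (if m + 2 \<le> k then Yc dz1 X m else 0) + (if 1 \<le> m then Yc dz0 X (m-1) else 0)" (is "_ = ?R")
proof -
  have pt: "(\<Sum>j<4. adj (D1 k) j (2*m+1) q * X j q) =
     (if q = m \<and> True then Yc dz1 X q else 0) + (if q = m - 1 \<and> 1 \<le> m then Yc dz0 X q else 0)"
    if "q < k - 1" for q
  proof -
    have cf: "adj (D1 k) j (2*m+1) q = (if q = m then dz1 j else if q = m - 1 \<and> 1 \<le> m then dz0 j else 0)" for j
      using assms that by (auto simp: D1_def adj_def)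
    show ?thesis unfolding cf using assms that by (auto simp: Yc_def)
  qed
  have "(\<Sum>q<k-1. \<Sum>j<4. adj (D1 k) j (2*m+1) q * X j q) = (\<Sum>q<k-1.
     (if q = m \<and> True then Yc dz1 X q else 0) + (if q = m - 1 \<and> 1 \<le> m then Yc dz0 X q else 0))"
    by (rule sum.cong[OF refl], rule pt) simp
  also have "\<dots> = ?R" unfolding sum.distrib sum_delta_cond using assms by auto
  finally show ?thesis .
qed


definition EE :: "real \<Rightarrow> real \<Rightarrow> complex" where "EE c t = exp (complex_of_real (c * t))"

lemma EE_deriv: "((EE c) has_vector_derivative (of_real c * EE c t)) (at t within S)"
proof -
  have "((\<lambda>z. exp (of_real c * z)) has_field_derivative (of_real c * exp (of_real c * of_real t))) (at (of_real t))"
    by (auto intro!: derivative_eq_intros)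
  moreover have "EE c = (\<lambda>x. exp (of_real c * of_real x))" by (simp add: EE_def fun_eq_iff)
  ultimately show ?thesis using has_vector_derivative_real_field by (simp add: EE_def)
qed

lemma EE_0[simp]: "EE c 0 = 1" by (simp add: EE_def)
lemma EE_c0[simp]: "EE 0 t = 1" by (simp add: EE_def)

lemma EE_mult: "EE c t * EE d t = EE (c + d) t"
  by (simp add: EE_def exp_add[symmetric] algebra_simps)

lemma EE_nonzero[simp]: "EE c t \<noteq> 0" by (simp add: EE_def)

lemma fo:
  fixes f h g :: "real \<Rightarrow> complex"
  assumes "\<And>t. t \<ge> 0 \<Longrightarrow> (f has_vector_derivative (of_real c * f t + g t)) (at t within {0..})"
    and "\<And>t. t \<ge> 0 \<Longrightarrow> (h has_vector_derivative (of_real c * h t + g t)) (at t within {0..})"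
    and "t \<ge> 0"
  shows "f t = h t + (f 0 - h 0) * EE c t"
proof -
  define q where "q t = (f t - h t) * EE (-c) t" for t
  have "(q has_vector_derivative 0) (at t within {0..})" if "t \<in> {0..}" for t
  proof -
    have "(q has_vector_derivative ((of_real c * f t + g t) - (of_real c * h t + g t)) * EE (-c) t
            + (f t - h t) * (of_real (-c) * EE (-c) t)) (at t within {0..})"
      unfolding q_def using assms(1,2) that
      by (auto intro!: derivative_eq_intros EE_deriv simp: algebra_simps)
    then show ?thesis by (simp add: algebra_simps)
  qed
  then obtain C where C: "\<And>t. t \<in> {0..} \<Longrightarrow> q t = C"
    using has_vector_derivative_zero_constant[of "{0::real..}" q] by (auto simp: convex_real_interval)
  have "q t = q 0" using C assms(3) by auto
  then have "(f t - h t) * EE (-c) t = f 0 - h 0" by (simp add: q_def)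
  then have "(f t - h t) * (EE (-c) t * EE c t) = (f 0 - h 0) * EE c t" by (simp add: mult.assoc)
  moreover have "EE (-c) t * EE c t = 1" by (simp only: EE_mult) simp
  ultimately show ?thesis by (simp add: algebra_simps)
qed

lemma decay:
  fixes s K0 K1 :: real
  assumes "s > 0"
  shows "((\<lambda>t. (K0 + K1 * t) * exp (- (s * t))) \<longlongrightarrow> 0) at_top"
proof -
  have lim: "LIM t at_top. s * t :> at_top"
    using assms by (intro filterlim_tendsto_pos_mult_at_top[OF tendsto_const] filterlim_ident) auto
  have a: "((\<lambda>t. (s*t) ^ 0 / exp (s*t)) \<longlongrightarrow> 0) at_top"
    using filterlim_compose[OF tendsto_power_div_exp_0[of 0] lim] by (simp add: o_def)
  have b: "((\<lambda>t. (s*t) ^ 1 / exp (s*t)) \<longlongrightarrow> 0) at_top"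
    using filterlim_compose[OF tendsto_power_div_exp_0[of 1] lim] by (simp add: o_def)
  have "((\<lambda>t. K0 * ((s*t) ^ 0 / exp (s*t)) + (K1 / s) * ((s*t) ^ 1 / exp (s*t))) \<longlongrightarrow> K0 * 0 + (K1/s) * 0) at_top"
    by (intro tendsto_intros a b)
  moreover have "(\<lambda>t. K0 * ((s*t) ^ 0 / exp (s*t)) + (K1 / s) * ((s*t) ^ 1 / exp (s*t))) = (\<lambda>t. (K0 + K1 * t) * exp (- (s * t)))"
    using assms by (auto simp: fun_eq_iff exp_minus field_simps)
  ultimately show ?thesis by simp
qed

lemma affine_zero:
  fixes p q :: complex
  assumes "((\<lambda>t::real. p + q * of_real t) \<longlongrightarrow> 0) at_top"
  shows "p = 0 \<and> q = 0"
proof -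
  have i: "((\<lambda>t::real. of_real (inverse t) :: complex) \<longlongrightarrow> 0) at_top"
  proof -
    have "((\<lambda>t::real. inverse t) \<longlongrightarrow> 0) at_top" by (rule tendsto_inverse_0_at_top[OF filterlim_ident])
    then have "((\<lambda>t::real. complex_of_real (inverse t)) \<longlongrightarrow> complex_of_real 0) at_top" by (rule tendsto_of_real)
    then show ?thesis by simp
  qed
  have "((\<lambda>t::real. (p + q * of_real t) * of_real (inverse t)) \<longlongrightarrow> 0 * 0) at_top"
    by (intro tendsto_mult assms i)
  moreover have "((\<lambda>t::real. (p + q * of_real t) * of_real (inverse t)) \<longlongrightarrow> 0 + q) at_top"
  proof -
    have "((\<lambda>t::real. p * of_real (inverse t) + q) \<longlongrightarrow> p * 0 + q) at_top"
      by (intro tendsto_intros i)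
    moreover have "eventually (\<lambda>t::real. p * of_real (inverse t) + q = (p + q * of_real t) * of_real (inverse t)) at_top"
      using eventually_gt_at_top[of 0] by eventually_elim (auto simp: field_simps)
    ultimately show ?thesis by (simp add: tendsto_cong)
  qed
  ultimately have q: "q = 0" using tendsto_unique[OF trivial_limit_at_top_linorder] by fastforce
  then have "((\<lambda>t::real. p) \<longlongrightarrow> 0) at_top" using assms by simp
  then have "p = 0" using tendsto_unique[OF trivial_limit_at_top_linorder tendsto_const] by blast
  then show ?thesis using q by simp
qed

lemma quartic:
  fixes G :: "nat \<Rightarrow> real \<Rightarrow> complex" and s :: real
  assumes s: "s > 0" and tw: "tower G" and bd: "bounded (G 0 ` {0..})"
    and eq: "\<And>t. t \<ge> 0 \<Longrightarrow> G (Suc (Suc (Suc (Suc 0)))) t - 2 * of_real s ^ 2 * G (Suc (Suc 0)) t + of_real s ^ 4 * G 0 t = 0"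
  shows "\<exists>a b. \<forall>t\<ge>0. G 0 t = (a + b * of_real t) * EE (-s) t"
proof -
  define S where "S = complex_of_real s"
  have S0: "S \<noteq> 0" using s by (simp add: S_def)
  have d: "\<And>i t. t \<ge> 0 \<Longrightarrow> (G i has_vector_derivative G (Suc i) t) (at t within {0..})"
    using tw tower_def by auto
  define H3 where "H3 t = G (Suc (Suc (Suc 0))) t + S * G (Suc (Suc 0)) t - S^2 * G (Suc 0) t - S^3 * G 0 t" for t
  define C3 where "C3 = H3 0"
  have H3: "H3 t = C3 * EE s t" if "t \<ge> 0" for t
  proof -
    have "H3 t = 0 + (H3 0 - 0) * EE s t"
    proof (rule fo[where g = "\<lambda>_. 0"])
      fix t :: real assume t: "t \<ge> 0"
      show "(H3 has_vector_derivative (of_real s * H3 t + 0)) (at t within {0..})"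
        unfolding H3_def
        apply (rule has_vector_derivative_eq_rhs)
         apply (rule derivative_eq_intros d[OF t] refl)+
        using eq[OF t] unfolding S_def by algebra
    qed (use that in auto)
    then show ?thesis by (simp add: C3_def)
  qed
  define H2 where "H2 t = G (Suc (Suc 0)) t + 2 * S * G (Suc 0) t + S^2 * G 0 t" for t
  define C2 where "C2 = H2 0"
  have H2: "H2 t = (C2 + C3 * of_real t) * EE s t" if "t \<ge> 0" for t
  proof -
    have "H2 t = C3 * of_real t * EE s t + (H2 0 - C3 * of_real 0 * EE s 0) * EE s t"
    proof (rule fo[where g = "\<lambda>t. C3 * EE s t"])
      fix t :: real assume t: "t \<ge> 0"
      show "(H2 has_vector_derivative (of_real s * H2 t + C3 * EE s t)) (at t within {0..})"
        unfolding H2_def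
        apply (rule has_vector_derivative_eq_rhs)
         apply (rule derivative_eq_intros d[OF t] refl)+
        using H3[OF t] unfolding H3_def S_def by algebra
      show "((\<lambda>t. C3 * of_real t * EE s t) has_vector_derivative
              (of_real s * (C3 * of_real t * EE s t) + C3 * EE s t)) (at t within {0..})"
        apply (rule has_vector_derivative_eq_rhs)
         apply (rule derivative_eq_intros EE_deriv refl)+
        by (simp add: algebra_simps)
    qed (use that in auto)
    then show ?thesis by (simp add: C2_def algebra_simps)
  qed
  define q where "q = C3 / (2*S)"
  define p where "p = (C2 - q) / (2*S)"
  define H1 where "H1 t = G (Suc 0) t + S * G 0 t" for t
  define C1 where "C1 = H1 0 - p"
  have H1: "H1 t = (p + q * of_real t) * EE s t + C1 * EE (-s) t" if "t \<ge> 0" for t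
  proof -
    have "H1 t = (p + q * of_real t) * EE s t + (H1 0 - (p + q * of_real 0) * EE s 0) * EE (-s) t"
    proof (rule fo[where g = "\<lambda>t. (C2 + C3 * of_real t) * EE s t"])
      fix t :: real assume t: "t \<ge> 0"
      show "(H1 has_vector_derivative (of_real (-s) * H1 t + (C2 + C3 * of_real t) * EE s t)) (at t within {0..})"
        unfolding H1_def
        apply (rule has_vector_derivative_eq_rhs)
         apply (rule derivative_eq_intros d[OF t] refl)+
        using H2[OF t] unfolding H2_def S_def of_real_minus by algebra
      have qq: "C3 = 2 * S * q" "C2 = 2 * S * p + q" using S0 by (simp_all add: p_def q_def field_simps)
      show "((\<lambda>t. (p + q * of_real t) * EE s t) has_vector_derivative
              (of_real (-s) * ((p + q * of_real t) * EE s t) + (C2 + C3 * of_real t) * EE s t)) (at t within {0..})"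
        apply (rule has_vector_derivative_eq_rhs)
         apply (rule derivative_eq_intros EE_deriv refl)+
        unfolding qq S_def by (simp add: algebra_simps)
    qed (use that in auto)
    then show ?thesis by (simp add: C1_def algebra_simps)
  qed
  define q' where "q' = q / (2*S)"
  define p' where "p' = (p - q') / (2*S)"
  define C0 where "C0 = G 0 0 - p'"
  have G0: "G 0 t = (p' + q' * of_real t) * EE s t + (C0 + C1 * of_real t) * EE (-s) t" if "t \<ge> 0" for t
  proof -
    have "G 0 t = ((p' + q' * of_real t) * EE s t + C1 * of_real t * EE (-s) t)
       + (G 0 0 - ((p' + q' * of_real 0) * EE s 0 + C1 * of_real 0 * EE (-s) 0)) * EE (-s) t"
    proof (rule fo[where g = "\<lambda>t. (p + q * of_real t) * EE s t + C1 * EE (-s) t"])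
      fix t :: real assume t: "t \<ge> 0"
      show "(G 0 has_vector_derivative (of_real (-s) * G 0 t + ((p + q * of_real t) * EE s t + C1 * EE (-s) t))) (at t within {0..})"
        apply (rule has_vector_derivative_eq_rhs)
         apply (rule d[OF t])
        using H1[OF t] unfolding H1_def S_def of_real_minus by algebra
      have qq: "q = 2 * S * q'" "p = 2 * S * p' + q'" using S0 by (simp_all add: p'_def q'_def field_simps)
      show "((\<lambda>t. (p' + q' * of_real t) * EE s t + C1 * of_real t * EE (-s) t) has_vector_derivative
              (of_real (-s) * ((p' + q' * of_real t) * EE s t + C1 * of_real t * EE (-s) t)
                + ((p + q * of_real t) * EE s t + C1 * EE (-s) t))) (at t within {0..})"
        apply (rule has_vector_derivative_eq_rhs)
         apply (rule derivative_eq_intros EE_deriv refl)+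
        unfolding qq S_def by (simp add: algebra_simps)
    qed (use that in auto)
    then show ?thesis by (simp add: C0_def algebra_simps)
  qed
  obtain B where B: "\<And>t. t \<ge> 0 \<Longrightarrow> norm (G 0 t) \<le> B"
    using bd unfolding bounded_iff by auto
  have nE: "norm (EE c t) = exp (c * t)" for c t by (simp add: EE_def exp_of_real)
  have lim: "((\<lambda>t::real. p' + q' * of_real t) \<longlongrightarrow> 0) at_top"
  proof (rule Lim_null_comparison)
    show "((\<lambda>t. (B + norm C0 + norm C1 * t) * exp (- (s * t))) \<longlongrightarrow> 0) at_top"
      using decay[OF s, of "B + norm C0" "norm C1"] by (simp add: add.assoc)
    show "\<forall>\<^sub>F t in at_top. norm (p' + q' * of_real t) \<le> (B + norm C0 + norm C1 * t) * exp (- (s * t))"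
      using eventually_ge_at_top[of "0::real"]
    proof eventually_elim
      case (elim t)
      have e1: "EE s t * EE (-s) t = 1" by (simp only: EE_mult) simp
      have "p' + q' * of_real t = (G 0 t - (C0 + C1 * of_real t) * EE (-s) t) * EE (-s) t"
        using G0[OF elim] e1 by (simp add: algebra_simps)
      also have "norm \<dots> \<le> (norm (G 0 t) + (norm C0 + norm C1 * t) * exp (-s*t)) * exp (-s*t)"
        unfolding norm_mult nE
        apply (rule mult_right_mono)
        apply (rule order_trans[OF norm_triangle_ineq4])
        apply (rule add_left_mono)
        unfolding norm_mult nE
        apply (rule mult_right_mono)
        using elim by (auto intro!: order_trans[OF norm_triangle_ineq] simp: norm_mult)
      also have "\<dots> \<le> (B + (norm C0 + norm C1 * t)) * exp (-s*t)"
      proof -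
        have "exp (-s*t) \<le> 1" using s elim by auto
        then have "(norm C0 + norm C1 * t) * exp (-s*t) \<le> norm C0 + norm C1 * t"
          using elim by (intro mult_left_le) auto
        then show ?thesis using B[OF elim] by (intro mult_right_mono) auto
      qed
      finally show ?case by (simp add: add.assoc)
    qed
  qed
  then have "p' = 0 \<and> q' = 0" by (rule affine_zero)
  then show ?thesis using G0 by auto
qed


lemma chain_lemma:
  fixes X Y :: "nat \<Rightarrow> complex"
  assumes kern: "\<And>m. m < k \<Longrightarrow> z1 * X m - zb0 * Y m = 0 \<and> z0 * X m + zb1 * Y m = 0"
    and nz: "\<not> (z1 = 0 \<and> zb0 = 0 \<and> z0 = 0 \<and> zb1 = 0)"
    and det: "N1 * Nb1 + N0 * Nb0 = 1"
    and a0: "N1 * X 0 - Nb0 * Y 0 = 0"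
    and step: "\<And>m. m + 1 < k \<Longrightarrow> (N1 * X (m+1) - Nb0 * Y (m+1)) + (N0 * X m + Nb1 * Y m) = 0"
    and last: "N0 * X (k-1) + Nb1 * Y (k-1) = 0"
    and k: "k \<ge> 1"
  shows "\<And>m. m < k \<Longrightarrow> X m = 0 \<and> Y m = 0"
proof -
  have prp: "X m * Y m' = X m' * Y m" if "m < k" "m' < k" for m m'
  proof -
    define d where "d = X m * Y m' - X m' * Y m"
    have "z1 * d = 0" "zb0 * d = 0" "z0 * d = 0" "zb1 * d = 0"
      using kern[OF that(1)] kern[OF that(2)] unfolding d_def by algebra+
    then have "d = 0" using nz by auto
    then show ?thesis unfolding d_def by simp
  qed
  define an where "an m = N1 * X m - Nb0 * Y m" for m
  define bn where "bn m = N0 * X m + Nb1 * Y m" for m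
  have pr: "an m * bn m' = an m' * bn m" if "m < k" "m' < k" for m m'
    using prp[OF that] unfolding an_def bn_def by algebra
  have A: "an m = 0" if "m < k" for m
    using that
  proof (induction m)
    case 0 then show ?case using a0 by (simp add: an_def)
  next
    case (Suc m)
    have e: "an (m+1) + bn m = 0" using step[of m] Suc.prems by (simp add: an_def bn_def)
    have "an (m+1) * bn m = an m * bn (m+1)" using pr[of "m+1" m] Suc.prems by simp
    also have "\<dots> = 0" using Suc by simp
    finally have "an (m+1) * bn m = 0" .
    then have "bn m * bn m = 0" using e by (simp add: add_eq_0_iff)
    then have "bn m = 0" by simp
    then show ?case using e by simp
  qed
  have B: "bn m = 0" if "m < k" for m
  proof (cases "m + 1 < k")
    case True
    then have "an (m+1) + bn m = 0" using step[of m] by (simp add: an_def bn_def)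
    then show ?thesis using A[OF True] by simp
  next
    case False
    then have "m = k - 1" using that by auto
    then show ?thesis using last by (simp add: bn_def)
  qed
  fix m assume m: "m < k"
  have "X m = Nb1 * an m + Nb0 * bn m" "Y m = - N0 * an m + N1 * bn m"
    using det unfolding an_def bn_def by algebra+
  then show "X m = 0 \<and> Y m = 0" using A[OF m] B[OF m] by simp
qed

locale ctx =
  fixes \<xi> n :: "real^4" and s :: real
  assumes s_pos: "s > 0"
    and nn1: "(\<Sum>j<4. cmp n j * cmp n j) = 1"
    and orth: "(\<Sum>j<4. cmp \<xi> j * cmp n j) = 0"
    and xs: "(\<Sum>j<4. cmp \<xi> j * cmp \<xi> j) = s^2"
begin

definition xi :: "nat \<Rightarrow> complex" where "xi j = complex_of_real (cmp \<xi> j)"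
definition nv :: "nat \<Rightarrow> complex" where "nv j = complex_of_real (cmp n j)"
definition zx :: "(nat \<Rightarrow> complex) \<Rightarrow> complex" where "zx cf = \<i> * (\<Sum>j<4. cf j * xi j)"
definition zn :: "(nat \<Rightarrow> complex) \<Rightarrow> complex" where "zn cf = (\<Sum>j<4. cf j * nv j)"

definition Op :: "(nat \<Rightarrow> complex) \<Rightarrow> (nat \<Rightarrow> real \<Rightarrow> complex) \<Rightarrow> (nat \<Rightarrow> real \<Rightarrow> complex)" where
  "Op cf G = (\<lambda>i t. zx cf * G i t + zn cf * G (Suc i) t)"

definition opT :: "coeffs \<Rightarrow> nat \<Rightarrow> (nat \<Rightarrow> nat \<Rightarrow> real \<Rightarrow> complex) \<Rightarrow> nat \<Rightarrow> nat \<Rightarrow> real \<Rightarrow> complex" where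
  "opT A p G = (\<lambda>r i t. \<Sum>j<4. \<Sum>c<p. A j r c * (\<i> * xi j * G c i t + nv j * G c (Suc i) t))"

abbreviation "PP \<equiv> subst_deriv \<xi> n"

lemma P_eval:
  assumes "tower G" "\<And>t. t \<ge> 0 \<Longrightarrow> f t = G 0 t" "t \<ge> 0"
  shows "PP l f t = \<i> * xi l * G 0 t + nv l * G 1 t"
  using vd_eval[OF assms] assms(2,3) by (simp add: subst_deriv_def xi_def nv_def)

lemma opT_tower:
  assumes "\<And>c. c < p \<Longrightarrow> tower (G c)"
  shows "tower (opT A p G r)"
  unfolding tower_def opT_def
proof (intro allI impI)
  fix i and t :: real assume t: "t \<ge> 0"
  have "\<And>c. c < p \<Longrightarrow> (G c i has_vector_derivative G c (Suc i) t) (at t within {0..})"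
       "\<And>c. c < p \<Longrightarrow> (G c (Suc i) has_vector_derivative G c (Suc (Suc i)) t) (at t within {0..})"
    using assms t unfolding tower_def by auto
  then show "((\<lambda>t. \<Sum>j<4. \<Sum>c<p. A j r c * (\<i> * xi j * G c i t + nv j * G c (Suc i) t)) has_vector_derivative
         (\<Sum>j<4. \<Sum>c<p. A j r c * (\<i> * xi j * G c (Suc i) t + nv j * G c (Suc (Suc i)) t))) (at t within {0..})"
    by (auto intro!: derivative_eq_intros)
qed

lemma apply_eval:
  assumes "\<And>c. c < p \<Longrightarrow> tower (G c)" "\<And>c t. c < p \<Longrightarrow> t \<ge> 0 \<Longrightarrow> v c t = G c 0 t" "t \<ge> 0"
  shows "apply_op A p PP v r t = opT A p G r 0 t"
  unfolding apply_op_def opT_def using P_eval[OF assms(1,2) assms(3)] assms by simp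

lemma box_eval:
  assumes "\<And>c. c < 2*k \<Longrightarrow> tower (F c)" "\<And>c t. c < 2*k \<Longrightarrow> t \<ge> 0 \<Longrightarrow> u c t = F c 0 t" "t \<ge> 0"
  shows "box1 k PP u r t = opT (D0 k) (k+1) (opT (adj (D0 k)) (2*k) F) r 0 t
                           + opT (adj (D1 k)) (k-1) (opT (D1 k) (2*k) F) r 0 t"
proof -
  have a: "apply_op (D0 k) (k + 1) PP (apply_op (adj (D0 k)) (2 * k) PP u) r t
      = opT (D0 k) (k+1) (opT (adj (D0 k)) (2*k) F) r 0 t"
    by (rule apply_eval) (auto intro: opT_tower assms apply_eval[OF assms(1,2)])
  have b: "apply_op (adj (D1 k)) (k - 1) PP (apply_op (D1 k) (2 * k) PP u) r t
      = opT (adj (D1 k)) (k-1) (opT (D1 k) (2*k) F) r 0 t"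
    by (rule apply_eval) (auto intro: opT_tower assms apply_eval[OF assms(1,2)])
  show ?thesis unfolding box1_def a b ..
qed


lemma sum4: "(\<Sum>j<4. f j) = f 0 + f 1 + f 2 + f (3::nat)"
  by (simp add: numeral_eq_Suc lessThan_Suc add_ac)

lemma xs_c: "xi 0 * xi 0 + xi 1 * xi 1 + xi 2 * xi 2 + xi 3 * xi 3 = complex_of_real s ^ 2"
proof -
  have "complex_of_real (\<Sum>j<4. cmp \<xi> j * cmp \<xi> j) = complex_of_real (s^2)" using xs by simp
  then show ?thesis unfolding sum4 xi_def by simp
qed
lemma nn_c: "nv 0 * nv 0 + nv 1 * nv 1 + nv 2 * nv 2 + nv 3 * nv 3 = 1"
proof -
  have "complex_of_real (\<Sum>j<4. cmp n j * cmp n j) = 1" using nn1 by simp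
  then show ?thesis unfolding sum4 nv_def by simp
qed
lemma orth_c: "xi 0 * nv 0 + xi 1 * nv 1 + xi 2 * nv 2 + xi 3 * nv 3 = 0"
proof -
  have "complex_of_real (\<Sum>j<4. cmp \<xi> j * cmp n j) = 0" using orth by simp
  then show ?thesis unfolding sum4 xi_def nv_def by simp
qed

lemma zx_dz0: "zx dz0 = \<i> * (xi 0 - \<i> * xi 1)" by (simp add: zx_def sum4 dz0_def)
lemma zx_dzb0: "zx dzb0 = \<i> * (xi 0 + \<i> * xi 1)" by (simp add: zx_def sum4 dzb0_def)
lemma zx_dz1: "zx dz1 = \<i> * (xi 2 - \<i> * xi 3)" by (simp add: zx_def sum4 dz1_def)
lemma zx_dzb1: "zx dzb1 = \<i> * (xi 2 + \<i> * xi 3)" by (simp add: zx_def sum4 dzb1_def)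
lemma zn_dz0: "zn dz0 = nv 0 - \<i> * nv 1" by (simp add: zn_def sum4 dz0_def)
lemma zn_dzb0: "zn dzb0 = nv 0 + \<i> * nv 1" by (simp add: zn_def sum4 dzb0_def)
lemma zn_dz1: "zn dz1 = nv 2 - \<i> * nv 3" by (simp add: zn_def sum4 dz1_def)
lemma zn_dzb1: "zn dzb1 = nv 2 + \<i> * nv 3" by (simp add: zn_def sum4 dzb1_def)

lemmas zsimps = zx_dz0 zx_dzb0 zx_dz1 zx_dzb1 zn_dz0 zn_dzb0 zn_dz1 zn_dzb1

lemma K1: "zx dz0 * zx dzb0 + zx dz1 * zx dzb1 = - (complex_of_real s ^ 2)"
proof -
  have "zx dz0 * zx dzb0 + zx dz1 * zx dzb1 = - (xi 0 * xi 0 + xi 1 * xi 1 + xi 2 * xi 2 + xi 3 * xi 3)"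
    unfolding zsimps by (simp add: algebra_simps)
  then show ?thesis unfolding xs_c .
qed
lemma K2: "zx dz0 * zn dzb0 + zn dz0 * zx dzb0 + zx dz1 * zn dzb1 + zn dz1 * zx dzb1 = 0"
proof -
  have "zx dz0 * zn dzb0 + zn dz0 * zx dzb0 + zx dz1 * zn dzb1 + zn dz1 * zx dzb1
      = 2 * \<i> * (xi 0 * nv 0 + xi 1 * nv 1 + xi 2 * nv 2 + xi 3 * nv 3)"
    unfolding zsimps by (simp add: algebra_simps)
  then show ?thesis unfolding orth_c by simp
qed
lemma K3: "zn dz0 * zn dzb0 + zn dz1 * zn dzb1 = 1"
proof -
  have "zn dz0 * zn dzb0 + zn dz1 * zn dzb1 = nv 0 * nv 0 + nv 1 * nv 1 + nv 2 * nv 2 + nv 3 * nv 3"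
    unfolding zsimps by (simp add: algebra_simps)
  then show ?thesis unfolding nn_c .
qed

lemma cnj_xi[simp]: "cnj (xi j) = xi j" by (simp add: xi_def)
lemma cnj_nv[simp]: "cnj (nv j) = nv j" by (simp add: nv_def)

lemma conj_pairs:
  "cnj (zx dz0) = - zx dzb0" "cnj (zx dzb0) = - zx dz0" "cnj (zx dz1) = - zx dzb1" "cnj (zx dzb1) = - zx dz1"
  "cnj (zn dz0) = zn dzb0" "cnj (zn dzb0) = zn dz0" "cnj (zn dz1) = zn dzb1" "cnj (zn dzb1) = zn dz1"
  unfolding zsimps by (simp_all add: algebra_simps)


lemma Yc_Op: "Yc cf (\<lambda>j c. \<i> * xi j * G c i t + nv j * G c (Suc i) t) c = Op cf (G c) i t"
  by (simp add: Yc_def Op_def zx_def zn_def sum4 algebra_simps)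

lemma opT_swap: "opT A p G r i t = (\<Sum>c<p. \<Sum>j<4. A j r c * (\<lambda>j c. \<i> * xi j * G c i t + nv j * G c (Suc i) t) j c)"
  unfolding opT_def by (simp add: sum.swap[of _ "{..<4}"])

lemma opT_adjD0: "c \<le> k \<Longrightarrow> opT (adj (D0 k)) (2*k) G c i t =
   (if c < k then Op dz1 (G (2*c)) i t - Op dzb0 (G (2*c+1)) i t else 0)
 + (if 1 \<le> c then Op dz0 (G (2*c-2)) i t + Op dzb1 (G (2*c-1)) i t else 0)"
  unfolding opT_swap C_adjD0 Yc_Op ..

lemma opT_D1: "m + 2 \<le> k \<Longrightarrow> opT (D1 k) (2*k) G m i t =
   - Op dz0 (G (2*m)) i t - Op dzb1 (G (2*m+1)) i t + Op dz1 (G (2*m+2)) i t - Op dzb0 (G (2*m+3)) i t"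
  unfolding opT_swap C_D1 Yc_Op ..

lemma opT_D0_even: "m < k \<Longrightarrow> opT (D0 k) (k+1) G (2*m) i t = - Op dzb1 (G m) i t - Op dzb0 (G (m+1)) i t"
  unfolding opT_swap C_D0_even Yc_Op ..

lemma opT_D0_odd: "m < k \<Longrightarrow> opT (D0 k) (k+1) G (2*m+1) i t = Op dz0 (G m) i t - Op dz1 (G (m+1)) i t"
  unfolding opT_swap C_D0_odd Yc_Op ..

lemma opT_adjD1_even: "m < k \<Longrightarrow> opT (adj (D1 k)) (k-1) G (2*m) i t =
  (if m + 2 \<le> k then Op dzb0 (G m) i t else 0) - (if 1 \<le> m then Op dzb1 (G (m-1)) i t else 0)"
  unfolding opT_swap C_adjD1_even Yc_Op ..

lemma opT_adjD1_odd: "m < k \<Longrightarrow> opT (adj (D1 k)) (k-1) G (2*m+1) i t =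
  (if m + 2 \<le> k then Op dz1 (G m) i t else 0) + (if 1 \<le> m then Op dz0 (G (m-1)) i t else 0)"
  unfolding opT_swap C_adjD1_odd Yc_Op ..

definition al :: "(nat \<Rightarrow> nat \<Rightarrow> real \<Rightarrow> complex) \<Rightarrow> nat \<Rightarrow> nat \<Rightarrow> real \<Rightarrow> complex" where
  "al F m = (\<lambda>i t. Op dz1 (F (2*m)) i t - Op dzb0 (F (2*m+1)) i t)"
definition be :: "(nat \<Rightarrow> nat \<Rightarrow> real \<Rightarrow> complex) \<Rightarrow> nat \<Rightarrow> nat \<Rightarrow> real \<Rightarrow> complex" where
  "be F m = (\<lambda>i t. Op dz0 (F (2*m)) i t + Op dzb1 (F (2*m+1)) i t)"

lemma W_eval: "c \<le> k \<Longrightarrow> opT (adj (D0 k)) (2*k) F c i t =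
   (if c < k then al F c i t else 0) + (if 1 \<le> c then be F (c-1) i t else 0)"
proof -
  assume "c \<le> k"
  moreover have "1 \<le> c \<Longrightarrow> 2*c-2 = 2*(c-1) \<and> 2*c-1 = 2*(c-1)+1" by auto
  ultimately show ?thesis unfolding opT_adjD0[OF \<open>c \<le> k\<close>] al_def be_def by auto
qed

lemma X_eval: "m + 2 \<le> k \<Longrightarrow> opT (D1 k) (2*k) F m i t = al F (m+1) i t - be F m i t"
proof -
  assume a: "m + 2 \<le> k"
  have e: "2*m+2 = 2*(m+1)" "2*m+3 = 2*(m+1)+1" by auto
  show ?thesis unfolding opT_D1[OF a] al_def be_def e by (simp add: algebra_simps)
qed

definition c1 :: "nat \<Rightarrow> complex" where "c1 m = (if 1 \<le> m then 2 else 1)"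
definition c2 :: "nat \<Rightarrow> nat \<Rightarrow> complex" where "c2 k m = (if m + 2 \<le> k then 2 else 1)"

definition Rt :: "nat \<Rightarrow> (nat \<Rightarrow> nat \<Rightarrow> real \<Rightarrow> complex) \<Rightarrow> nat \<Rightarrow> nat \<Rightarrow> real \<Rightarrow> complex" where
  "Rt k F r = (\<lambda>i t. opT (D0 k) (k+1) (opT (adj (D0 k)) (2*k) F) r i t
                    + opT (adj (D1 k)) (k-1) (opT (D1 k) (2*k) F) r i t)"

lemma R_even:
  assumes "m < k"
  shows "Rt k F (2*m) i t = - (c1 m * Op dzb1 (al F m) i t) - c2 k m * Op dzb0 (be F m) i t"
proof -
  have w: "\<And>i. opT (adj (D0 k)) (2*k) F m i t = al F m i t + (if 1 \<le> m then be F (m-1) i t else 0)"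
          "\<And>i. opT (adj (D0 k)) (2*k) F (m+1) i t = (if m + 2 \<le> k then al F (m+1) i t else 0) + be F m i t"
    using assms by (auto simp: W_eval)
  have x: "\<And>i. m + 2 \<le> k \<Longrightarrow> opT (D1 k) (2*k) F m i t = al F (m+1) i t - be F m i t"
          "\<And>i. 1 \<le> m \<Longrightarrow> opT (D1 k) (2*k) F (m-1) i t = al F m i t - be F (m-1) i t"
    using assms by (auto simp: X_eval)
  show ?thesis
    apply (cases "1 \<le> m"; cases "m + 2 \<le> k")
       apply (simp_all only: Rt_def opT_D0_even[OF assms] opT_adjD1_even[OF assms] w x if_True if_False Op_def c1_def c2_def)
       apply (simp_all add: algebra_simps)
    done
qed

lemma R_odd:
  assumes "m < k"
  shows "Rt k F (2*m+1) i t = c1 m * Op dz0 (al F m) i t - c2 k m * Op dz1 (be F m) i t"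
proof -
  have w: "\<And>i. opT (adj (D0 k)) (2*k) F m i t = al F m i t + (if 1 \<le> m then be F (m-1) i t else 0)"
          "\<And>i. opT (adj (D0 k)) (2*k) F (m+1) i t = (if m + 2 \<le> k then al F (m+1) i t else 0) + be F m i t"
    using assms by (auto simp: W_eval)
  have x: "\<And>i. m + 2 \<le> k \<Longrightarrow> opT (D1 k) (2*k) F m i t = al F (m+1) i t - be F m i t"
          "\<And>i. 1 \<le> m \<Longrightarrow> opT (D1 k) (2*k) F (m-1) i t = al F m i t - be F (m-1) i t"
    using assms by (auto simp: X_eval)
  show ?thesis
    apply (cases "1 \<le> m"; cases "m + 2 \<le> k")
       apply (simp_all only: Rt_def opT_D0_odd[OF assms] opT_adjD1_odd[OF assms] w x if_True if_False Op_def c1_def c2_def)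
       apply (simp_all add: algebra_simps)
    done
qed

definition Dl :: "(nat \<Rightarrow> real \<Rightarrow> complex) \<Rightarrow> nat \<Rightarrow> real \<Rightarrow> complex" where
  "Dl G = (\<lambda>i t. G (Suc (Suc i)) t - complex_of_real s ^ 2 * G i t)"

lemma elim_A:
  "Op dz1 (\<lambda>i t. - (c * Op dzb1 A i t) - d * Op dzb0 B i t) i t
   - Op dzb0 (\<lambda>i t. c * Op dz0 A i t - d * Op dz1 B i t) i t = - c * Dl A i t"
  using K1 K2 K3 unfolding Op_def Dl_def by algebra

lemma elim_B:
  "Op dz0 (\<lambda>i t. - (c * Op dzb1 A i t) - d * Op dzb0 B i t) i t
   + Op dzb1 (\<lambda>i t. c * Op dz0 A i t - d * Op dz1 B i t) i t = - d * Dl B i t"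
  using K1 K2 K3 unfolding Op_def Dl_def by algebra

lemma Dl_x: "Op dzb1 (\<lambda>i t. Op dz1 X i t - Op dzb0 Y i t) i t + Op dzb0 (\<lambda>i t. Op dz0 X i t + Op dzb1 Y i t) i t
   = Dl X i t"
  using K1 K2 K3 unfolding Op_def Dl_def by algebra

lemma Dl_y: "- Op dz0 (\<lambda>i t. Op dz1 X i t - Op dzb0 Y i t) i t + Op dz1 (\<lambda>i t. Op dz0 X i t + Op dzb1 Y i t) i t
   = Dl Y i t"
  using K1 K2 K3 unfolding Op_def Dl_def by algebra

definition SS :: complex where "SS = complex_of_real s"
lemma SS_nz[simp]: "SS \<noteq> 0" using s_pos by (simp add: SS_def)
lemma cnj_SS[simp]: "cnj SS = SS" by (simp add: SS_def)

definition ev :: "complex \<times> complex \<Rightarrow> real \<Rightarrow> complex" where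
  "ev p t = (fst p + snd p * of_real t) * EE (-s) t"
definition Lv :: "complex \<times> complex \<Rightarrow> complex \<times> complex" where
  "Lv p = (- SS * fst p + snd p, - SS * snd p)"
definition sc :: "complex \<Rightarrow> complex \<times> complex \<Rightarrow> complex \<times> complex" where
  "sc z p = (z * fst p, z * snd p)"
definition Tw :: "complex \<times> complex \<Rightarrow> nat \<Rightarrow> real \<Rightarrow> complex" where
  "Tw p = (\<lambda>i t. ev ((Lv ^^ i) p) t)"
definition OpV :: "(nat \<Rightarrow> complex) \<Rightarrow> complex \<times> complex \<Rightarrow> complex \<times> complex" where
  "OpV cf p = sc (zx cf) p + sc (zn cf) (Lv p)"

lemma ev_add: "ev (p + q) t = ev p t + ev q t" by (simp add: ev_def algebra_simps)
lemma ev_diff: "ev (p - q) t = ev p t - ev q t" by (simp add: ev_def algebra_simps)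
lemma ev_sc: "ev (sc z p) t = z * ev p t" by (simp add: ev_def sc_def algebra_simps)
lemma ev_neg: "ev (- p) t = - ev p t" by (simp add: ev_def algebra_simps)
lemma Lv_add: "Lv (p + q) = Lv p + Lv q" by (simp add: Lv_def algebra_simps)
lemma Lv_diff: "Lv (p - q) = Lv p - Lv q" by (simp add: Lv_def algebra_simps)
lemma Lv_sc: "Lv (sc z p) = sc z (Lv p)" by (simp add: Lv_def sc_def algebra_simps)
lemma Lvp_add: "(Lv ^^ i) (p + q) = (Lv ^^ i) p + (Lv ^^ i) q" by (induction i) (simp_all add: Lv_add)
lemma Lvp_diff: "(Lv ^^ i) (p - q) = (Lv ^^ i) p - (Lv ^^ i) q" by (induction i) (simp_all add: Lv_diff)
lemma Lvp_sc: "(Lv ^^ i) (sc z p) = sc z ((Lv ^^ i) p)" by (induction i) (simp_all add: Lv_sc)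
lemma Lvp_Lv: "(Lv ^^ i) (Lv p) = Lv ((Lv ^^ i) p)" by (induction i) simp_all

lemma Tw_add: "Tw (p + q) i t = Tw p i t + Tw q i t" by (simp add: Tw_def Lvp_add ev_add)
lemma Tw_diff: "Tw (p - q) i t = Tw p i t - Tw q i t" by (simp add: Tw_def Lvp_diff ev_diff)
lemma Tw_sc: "Tw (sc z p) i t = z * Tw p i t" by (simp add: Tw_def Lvp_sc ev_sc)
lemma Tw_Suc: "Tw p (Suc i) t = Tw (Lv p) i t" by (simp add: Tw_def funpow_Suc_right Lvp_Lv del: funpow.simps)
lemma Tw_0: "Tw p 0 t = ev p t" by (simp add: Tw_def)

lemma Tw_Op: "Op cf (Tw p) i t = Tw (OpV cf p) i t"
  by (simp add: Op_def OpV_def Tw_add Tw_sc Tw_Suc)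

lemma ev_deriv: "((ev p) has_vector_derivative ev (Lv p) t) (at t within S)"
  unfolding ev_def Lv_def
  apply (rule has_vector_derivative_eq_rhs)
   apply (rule derivative_eq_intros EE_deriv refl)+
  by (simp add: SS_def algebra_simps)

lemma Tw_tower: "tower (Tw p)"
  unfolding tower_def Tw_def using ev_deriv by (simp add: Lvp_Lv)

lemma ev_inj: assumes "\<And>t. t \<ge> 0 \<Longrightarrow> ev p t = 0" shows "p = 0"
proof -
  have "ev p 0 = 0" "ev p 1 = 0" using assms by auto
  then show ?thesis by (cases p) (simp add: ev_def zero_prod_def)
qed

definition ip :: "complex \<times> complex \<Rightarrow> complex \<times> complex \<Rightarrow> complex" where
  "ip p q = fst p * cnj (fst q) / (2 * SS) + (fst p * cnj (snd q) + snd p * cnj (fst q)) / (4 * SS^2)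
           + snd p * cnj (snd q) / (4 * SS^3)"

lemma ip_ibp: "ip (Lv p) q + ip p (Lv q) = - (fst p * cnj (fst q))"
  by (simp add: ip_def Lv_def field_simps power2_eq_square power3_eq_cube)

lemma ip_add1: "ip (p + q) r = ip p r + ip q r" by (simp add: ip_def algebra_simps add_divide_distrib)
lemma ip_diff1: "ip (p - q) r = ip p r - ip q r" by (simp add: ip_def algebra_simps diff_divide_distrib)
lemma ip_neg1: "ip (- p) r = - ip p r" by (simp add: ip_def field_simps)
lemma ip_sc1: "ip (sc z p) r = z * ip p r" by (simp add: ip_def sc_def algebra_simps times_divide_eq_right)
lemma ip_add2: "ip r (p + q) = ip r p + ip r q" by (simp add: ip_def algebra_simps add_divide_distrib)
lemma ip_diff2: "ip r (p - q) = ip r p - ip r q" by (simp add: ip_def algebra_simps diff_divide_distrib)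
lemma ip_sc2: "ip r (sc z p) = cnj z * ip r p" by (simp add: ip_def sc_def algebra_simps times_divide_eq_right)

lemma ip_OpV:
  assumes "cnj (zx cf') = - zx cf" "cnj (zn cf') = zn cf"
  shows "ip (OpV cf p) q = - ip p (OpV cf' q) - zn cf * fst p * cnj (fst q)"
proof -
  have "ip (OpV cf p) q + ip p (OpV cf' q) = zn cf * (ip (Lv p) q + ip p (Lv q))"
    unfolding OpV_def ip_add1 ip_add2 ip_sc1 ip_sc2 assms by (simp add: algebra_simps)
  then have "ip (OpV cf p) q + ip p (OpV cf' q) = - (zn cf * fst p * cnj (fst q))"
    unfolding ip_ibp by (simp add: algebra_simps)
  then show ?thesis by algebra
qed

lemma ip_self: "ip p p = complex_of_real ((s^2 * (cmod (fst p))^2 + (cmod (SS * fst p + snd p))^2) / (4 * s^3))"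
proof -
  obtain a b where p: "p = (a, b)" by (cases p)
  have "(cmod (SS * a + b))^2 = SS^2 * (a * cnj a) + SS * (a * cnj b + b * cnj a) + b * cnj b"
    unfolding complex_norm_square by (simp add: algebra_simps power2_eq_square)
  moreover have "complex_of_real ((cmod a)^2) = a * cnj a" "complex_of_real ((cmod b)^2) = b * cnj b"
    using complex_norm_square by metis+
  ultimately show ?thesis unfolding p ip_def using s_pos
    by (simp add: SS_def field_simps power2_eq_square power3_eq_cube)
qed

lemma ip_self_pos:
  assumes "ip p p = 0" shows "p = 0"
proof -
  have "(s^2 * (cmod (fst p))^2 + (cmod (SS * fst p + snd p))^2) / (4 * s^3) = 0"
    using assms unfolding ip_self by (simp only: of_real_eq_0_iff)
  then have "s^2 * (cmod (fst p))^2 + (cmod (SS * fst p + snd p))^2 = 0" using s_pos by simp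
  moreover have "s^2 * (cmod (fst p))^2 \<ge> 0" "(cmod (SS * fst p + snd p))^2 \<ge> 0" by simp_all
  ultimately have "s^2 * (cmod (fst p))^2 = 0" "(cmod (SS * fst p + snd p))^2 = 0" by linarith+
  then have "fst p = 0" "snd p = 0" using s_pos by auto
  then show ?thesis by (simp add: prod_eq_iff)
qed

lemma ip_self_real: "\<exists>r\<ge>0. ip p p = complex_of_real r"
  unfolding ip_self using s_pos by (intro exI[of _ "(s^2 * (cmod (fst p))^2 + (cmod (SS * fst p + snd p))^2) / (4 * s^3)"]) auto

lemma ibp1: "ip (OpV dzb1 p) q = - ip p (OpV dz1 q) - zn dzb1 * fst p * cnj (fst q)"
  by (rule ip_OpV) (simp_all add: conj_pairs)
lemma ibp2: "ip (OpV dzb0 p) q = - ip p (OpV dz0 q) - zn dzb0 * fst p * cnj (fst q)"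
  by (rule ip_OpV) (simp_all add: conj_pairs)
lemma ibp3: "ip (OpV dz0 p) q = - ip p (OpV dzb0 q) - zn dz0 * fst p * cnj (fst q)"
  by (rule ip_OpV) (simp_all add: conj_pairs)
lemma ibp4: "ip (OpV dz1 p) q = - ip p (OpV dzb1 q) - zn dz1 * fst p * cnj (fst q)"
  by (rule ip_OpV) (simp_all add: conj_pairs)

lemma pair_energy:
  fixes x y :: "complex \<times> complex" and c1 c2 :: complex
  defines "a \<equiv> OpV dz1 x - OpV dzb0 y" and "b \<equiv> OpV dz0 x + OpV dzb1 y"
  shows "ip (- sc c1 (OpV dzb1 a) - sc c2 (OpV dzb0 b)) x + ip (sc c1 (OpV dz0 a) - sc c2 (OpV dz1 b)) y
     = c1 * ip a a + c2 * ip b b + c1 * fst a * cnj (zn dz1 * fst x - zn dzb0 * fst y)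
       + c2 * fst b * cnj (zn dz0 * fst x + zn dzb1 * fst y)"
proof -
  have aa: "ip a a = ip a (OpV dz1 x) - ip a (OpV dzb0 y)" by (simp only: a_def ip_diff2)
  have bb: "ip b b = ip b (OpV dz0 x) + ip b (OpV dzb1 y)" by (simp only: b_def ip_add2)
  show ?thesis
    unfolding ip_diff1 ip_neg1 ip_sc1 ibp1 ibp2 ibp3 ibp4 aa bb complex_cnj_diff complex_cnj_add
      complex_cnj_mult conj_pairs
    by (simp add: algebra_simps)
qed

lemma real_lemma: "SS * nv j = \<i> * xi j \<Longrightarrow> nv j = 0"
proof -
  assume h: "SS * nv j = \<i> * xi j"
  have "Re (SS * nv j) = Re (\<i> * xi j)" using h by simp
  then have "s * cmp n j = 0" by (simp add: SS_def nv_def xi_def)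
  then show ?thesis using s_pos by (simp add: nv_def)
qed

lemma zeta_nz: "\<not> (zx dz1 - SS * zn dz1 = 0 \<and> zx dzb0 - SS * zn dzb0 = 0 \<and> zx dz0 - SS * zn dz0 = 0
                   \<and> zx dzb1 - SS * zn dzb1 = 0)"
proof
  assume E: "zx dz1 - SS * zn dz1 = 0 \<and> zx dzb0 - SS * zn dzb0 = 0 \<and> zx dz0 - SS * zn dz0 = 0
                   \<and> zx dzb1 - SS * zn dzb1 = 0"
  have "\<i> * \<i> = (-1::complex)" by simp
  have "SS * nv 0 = \<i> * xi 0" "SS * nv 1 = \<i> * xi 1" "SS * nv 2 = \<i> * xi 2" "SS * nv 3 = \<i> * xi 3"
    using E \<open>\<i> * \<i> = -1\<close> unfolding zsimps by algebra+
  then have "nv 0 = 0" "nv 1 = 0" "nv 2 = 0" "nv 3 = 0" using real_lemma by blast+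
  then show False using nn_c by simp
qed

lemma Dl_Op: "Dl (\<lambda>i t. Op a G i t + Op b H i t) i t = Op a (Dl G) i t + Op b (Dl H) i t"
  by (simp add: Dl_def Op_def algebra_simps)
lemma Dl_Op2: "Dl (\<lambda>i t. - Op a G i t + Op b H i t) i t = - Op a (Dl G) i t + Op b (Dl H) i t"
  by (simp add: Dl_def Op_def algebra_simps)

lemma Rt_tower:
  assumes "\<And>c. c < 2*k \<Longrightarrow> tower (F c)"
  shows "tower (Rt k F r)"
proof -
  have "tower (\<lambda>i t. 1 * opT (D0 k) (k+1) (opT (adj (D0 k)) (2*k) F) r i t
                     + 1 * opT (adj (D1 k)) (k-1) (opT (D1 k) (2*k) F) r i t)"
    by (intro tower_lin opT_tower assms)
  then show ?thesis by (simp add: Rt_def)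
qed

lemma quartic_cond:
  "Dl (Dl G) 0 t = G (Suc (Suc (Suc (Suc 0)))) t - 2 * of_real s ^ 2 * G (Suc (Suc 0)) t + of_real s ^ 4 * G 0 t"
  by (simp add: Dl_def algebra_simps power2_eq_square power4_eq_xxxx)

lemma c1_nz: "c1 m \<noteq> 0" by (simp add: c1_def)
lemma c2_nz: "c2 k m \<noteq> 0" by (simp add: c2_def)

lemma stage1:
  assumes F: "\<And>c. c < 2*k \<Longrightarrow> tower (F c)"
    and R0: "\<And>r t. r < 2*k \<Longrightarrow> t \<ge> 0 \<Longrightarrow> Rt k F r 0 t = 0"
    and bd: "\<And>c. c < 2*k \<Longrightarrow> bounded (F c 0 ` {0..})"
  shows "\<And>c. c < 2*k \<Longrightarrow> \<exists>a b. \<forall>t\<ge>0. F c 0 t = (a + b * of_real t) * EE (-s) t"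
proof -
  have Rz: "Rt k F r i t = 0" if "r < 2*k" "t \<ge> 0" for r i t
  proof -
    have tw: "tower (Rt k F r)" by (rule Rt_tower) (rule F)
    show ?thesis by (rule tower_zero[OF tw]) (use R0 that in auto)
  qed
  have DA: "Dl (al F m) i t = 0" "Dl (be F m) i t = 0" if m: "m < k" and t: "t \<ge> 0" for m i t
  proof -
    have e1: "Rt k F (2*m) = (\<lambda>i t. - (c1 m * Op dzb1 (al F m) i t) - c2 k m * Op dzb0 (be F m) i t)"
      using R_even[OF m] by (intro ext) simp
    have e2: "Rt k F (2*m+1) = (\<lambda>i t. c1 m * Op dz0 (al F m) i t - c2 k m * Op dz1 (be F m) i t)"
      using R_odd[OF m] by (intro ext) simp
    have z1: "Op cf (Rt k F (2*m)) i t = 0" "Op cf (Rt k F (2*m+1)) i t = 0" for cf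
      using Rz[of "2*m"] Rz[of "2*m+1"] m t by (auto simp: Op_def)
    have "- c1 m * Dl (al F m) i t = 0"
      using elim_A[of "c1 m" "al F m" "c2 k m" "be F m" i t] z1[of dz1] z1[of dzb0] unfolding e1 e2 by simp
    then show "Dl (al F m) i t = 0" using c1_nz by simp
    have "- c2 k m * Dl (be F m) i t = 0"
      using elim_B[of "c1 m" "al F m" "c2 k m" "be F m" i t] z1[of dz0] z1[of dzb1] unfolding e1 e2 by simp
    then show "Dl (be F m) i t = 0" using c2_nz by simp
  qed
  fix c assume c: "c < 2*k"
  obtain m where m: "m < k" and cm: "c = 2*m \<or> c = 2*m+1"
  proof
    show "c div 2 < k" using c by auto
    show "c = 2 * (c div 2) \<or> c = 2 * (c div 2) + 1" by presburger
  qed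
  have dx: "Dl (F (2*m)) = (\<lambda>i t. Op dzb1 (al F m) i t + Op dzb0 (be F m) i t)"
    unfolding al_def be_def by (intro ext) (rule Dl_x[symmetric])
  have dy: "Dl (F (2*m+1)) = (\<lambda>i t. - Op dz0 (al F m) i t + Op dz1 (be F m) i t)"
    unfolding al_def be_def by (intro ext) (rule Dl_y[symmetric])
  have q: "Dl (Dl (F c)) 0 t = 0" if t: "t \<ge> 0" for t
    using cm
  proof
    assume h: "c = 2*m"
    show ?thesis unfolding h dx Dl_Op using DA[OF m t] by (simp add: Op_def)
  next
    assume h: "c = 2*m+1"
    show ?thesis unfolding h dy Dl_Op2 using DA[OF m t] by (simp add: Op_def)
  qed
  show "\<exists>a b. \<forall>t\<ge>0. F c 0 t = (a + b * of_real t) * EE (-s) t"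
    by (rule quartic[OF s_pos F[OF c] bd[OF c]]) (use q quartic_cond in auto)
qed

definition aV :: "(nat \<Rightarrow> complex \<times> complex) \<Rightarrow> nat \<Rightarrow> complex \<times> complex" where
  "aV P m = OpV dz1 (P (2*m)) - OpV dzb0 (P (2*m+1))"
definition bV :: "(nat \<Rightarrow> complex \<times> complex) \<Rightarrow> nat \<Rightarrow> complex \<times> complex" where
  "bV P m = OpV dz0 (P (2*m)) + OpV dzb1 (P (2*m+1))"
definition an :: "(nat \<Rightarrow> complex \<times> complex) \<Rightarrow> nat \<Rightarrow> complex" where
  "an P m = zn dz1 * fst (P (2*m)) - zn dzb0 * fst (P (2*m+1))"
definition bn :: "(nat \<Rightarrow> complex \<times> complex) \<Rightarrow> nat \<Rightarrow> complex" where
  "bn P m = zn dz0 * fst (P (2*m)) + zn dzb1 * fst (P (2*m+1))"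

lemma OpV_zero: "OpV cf 0 = 0" by (simp add: OpV_def sc_def Lv_def zero_prod_def)

lemma fst_OpV: "fst (OpV cf p) = zx cf * fst p + zn cf * (- SS * fst p + snd p)"
  by (simp add: OpV_def sc_def Lv_def)

lemma bsum_zero:
  fixes A B an bn :: "nat \<Rightarrow> complex"
  assumes k: "k \<ge> 1"
    and a0: "an 0 = 0" and bl: "bn (k-1) = 0"
    and st: "\<And>m. m + 1 < k \<Longrightarrow> an (m+1) + bn m = 0"
    and ab: "\<And>m. m + 2 \<le> k \<Longrightarrow> A (m+1) = B m"
  shows "(\<Sum>m<k. c1 m * A m * cnj (an m) + c2 k m * B m * cnj (bn m)) = 0"
proof -
  obtain K where K: "k = Suc K" using k by (cases k) auto
  have "(\<Sum>m<k. c1 m * A m * cnj (an m)) = (\<Sum>m<K. 2 * A (Suc m) * cnj (an (Suc m)))"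
    unfolding K sum.lessThan_Suc_shift using a0 by (simp add: c1_def)
  also have "\<dots> = (\<Sum>m<K. - 2 * B m * cnj (bn m))"
  proof (rule sum.cong[OF refl])
    fix m assume "m \<in> {..<K}"
    then have m: "m + 1 < k" "m + 2 \<le> k" using K by auto
    have "an (Suc m) = - bn m" using st[OF m(1)] by (simp add: add_eq_0_iff)
    then show "2 * A (Suc m) * cnj (an (Suc m)) = - 2 * B m * cnj (bn m)" using ab[OF m(2)] by simp
  qed
  finally have s1: "(\<Sum>m<k. c1 m * A m * cnj (an m)) = (\<Sum>m<K. - 2 * B m * cnj (bn m))" .
  have "(\<Sum>m<k. c2 k m * B m * cnj (bn m)) = (\<Sum>m<K. c2 k m * B m * cnj (bn m)) + c2 k K * B K * cnj (bn K)"
    unfolding K by simp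
  also have "\<dots> = (\<Sum>m<K. 2 * B m * cnj (bn m))"
    using bl K by (auto simp: c2_def intro!: sum.cong)
  finally have s2: "(\<Sum>m<k. c2 k m * B m * cnj (bn m)) = (\<Sum>m<K. 2 * B m * cnj (bn m))" .
  show ?thesis unfolding sum.distrib s1 s2 by (simp add: sum_negf)
qed

lemma stage2:
  assumes FT: "\<And>c i t. c < 2*k \<Longrightarrow> t \<ge> 0 \<Longrightarrow> F c i t = Tw (P c) i t"
    and R0: "\<And>r t. r < 2*k \<Longrightarrow> t \<ge> 0 \<Longrightarrow> Rt k F r 0 t = 0"
    and bc1: "\<And>r. r \<le> k \<Longrightarrow> (if r < k then an P r else 0) + (if 1 \<le> r then bn P (r-1) else 0) = 0"
    and bc2: "\<And>m. m + 2 \<le> k \<Longrightarrow> fst (aV P (m+1)) = fst (bV P m)"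
    and k: "k \<ge> 1"
  shows "\<And>c. c < 2*k \<Longrightarrow> P c = 0"
proof -
  have alT: "al F m i t = Tw (aV P m) i t" "be F m i t = Tw (bV P m) i t" if "m < k" "t \<ge> 0" for m i t
    using that by (simp_all add: al_def be_def aV_def bV_def Op_def FT Tw_diff Tw_add Tw_Op[symmetric])
  have OpT: "Op cf (al F m) i t = Tw (OpV cf (aV P m)) i t" "Op cf (be F m) i t = Tw (OpV cf (bV P m)) i t"
    if "m < k" "t \<ge> 0" for cf m i t
    using that by (simp_all add: Op_def alT Tw_Op[symmetric])
  define RV1 where "RV1 m = - sc (c1 m) (OpV dzb1 (aV P m)) - sc (c2 k m) (OpV dzb0 (bV P m))" for m
  define RV2 where "RV2 m = sc (c1 m) (OpV dz0 (aV P m)) - sc (c2 k m) (OpV dz1 (bV P m))" for m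
  have RV: "RV1 m = 0 \<and> RV2 m = 0" if m: "m < k" for m
  proof -
    have "ev (RV1 m) t = 0" if t: "t \<ge> 0" for t
    proof -
      have "ev (RV1 m) t = Rt k F (2*m) 0 t"
        unfolding R_even[OF m] OpT[OF m t] RV1_def Tw_0[symmetric] Tw_diff Tw_sc
        by (simp add: Tw_def ev_neg ev_sc)
      then show ?thesis using R0[of "2*m" t] m t by simp
    qed
    moreover have "ev (RV2 m) t = 0" if t: "t \<ge> 0" for t
    proof -
      have "ev (RV2 m) t = Rt k F (2*m+1) 0 t"
        unfolding R_odd[OF m] OpT[OF m t] RV2_def Tw_0[symmetric] Tw_diff Tw_sc ..
      then show ?thesis using R0[of "2*m+1" t] m t by simp
    qed
    ultimately show ?thesis using ev_inj by blast
  qed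
  define E where "E m = c1 m * ip (aV P m) (aV P m) + c2 k m * ip (bV P m) (bV P m)" for m
  have En: "E m + (c1 m * fst (aV P m) * cnj (an P m) + c2 k m * fst (bV P m) * cnj (bn P m)) = 0"
    if m: "m < k" for m
  proof -
    have "ip (RV1 m) (P (2*m)) + ip (RV2 m) (P (2*m+1)) = 0" using RV[OF m] by (simp add: ip_def zero_prod_def)
    moreover have "ip (RV1 m) (P (2*m)) + ip (RV2 m) (P (2*m+1)) =
        E m + (c1 m * fst (aV P m) * cnj (an P m) + c2 k m * fst (bV P m) * cnj (bn P m))"
      unfolding RV1_def RV2_def E_def an_def bn_def aV_def bV_def by (rule pair_energy[THEN trans]) simp
    ultimately show ?thesis by simp
  qed
  have bs: "(\<Sum>m<k. c1 m * fst (aV P m) * cnj (an P m) + c2 k m * fst (bV P m) * cnj (bn P m)) = 0"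
  proof (rule bsum_zero[OF k])
    show "an P 0 = 0" using bc1[of 0] k by simp
    show "bn P (k-1) = 0" using bc1[of k] k by simp
    show "an P (m+1) + bn P m = 0" if "m + 1 < k" for m using bc1[of "m+1"] that by simp
    show "fst (aV P (m+1)) = fst (bV P m)" if "m + 2 \<le> k" for m using bc2 that by simp
  qed
  have Es: "(\<Sum>m<k. E m) = 0"
  proof -
    have "(\<Sum>m<k. E m) = (\<Sum>m<k. - (c1 m * fst (aV P m) * cnj (an P m) + c2 k m * fst (bV P m) * cnj (bn P m)))"
    proof (rule sum.cong[OF refl])
      fix m assume "m \<in> {..<k}"
      then show "E m = - (c1 m * fst (aV P m) * cnj (an P m) + c2 k m * fst (bV P m) * cnj (bn P m))"
        using En by (intro eq_neg_iff_add_eq_0[THEN iffD2]) simp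
    qed
    also have "\<dots> = - (\<Sum>m<k. c1 m * fst (aV P m) * cnj (an P m) + c2 k m * fst (bV P m) * cnj (bn P m))"
      by (rule sum_negf)
    finally show ?thesis using bs by simp
  qed
  have ereal: "\<exists>e\<ge>0. E m = complex_of_real e \<and> (e = 0 \<longrightarrow> aV P m = 0 \<and> bV P m = 0)" for m
  proof -
    obtain r1 where r1: "r1 \<ge> 0" "ip (aV P m) (aV P m) = complex_of_real r1" using ip_self_real by blast
    obtain r2 where r2: "r2 \<ge> 0" "ip (bV P m) (bV P m) = complex_of_real r2" using ip_self_real by blast
    obtain d1 d2 :: real where d: "c1 m = complex_of_real d1" "c2 k m = complex_of_real d2" "d1 \<ge> 1" "d2 \<ge> 1"
      proof
      show "c1 m = complex_of_real (if 1 \<le> m then 2 else 1)" by (simp add: c1_def)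
      show "c2 k m = complex_of_real (if m + 2 \<le> k then 2 else 1)" by (simp add: c2_def)
    qed auto
    show ?thesis
    proof (intro exI conjI impI)
      show "E m = complex_of_real (d1 * r1 + d2 * r2)" unfolding E_def r1 r2 d by simp
      show "0 \<le> d1 * r1 + d2 * r2" using r1 r2 d by simp
      assume "d1 * r1 + d2 * r2 = 0"
      moreover have "d1 * r1 \<ge> 0" "d2 * r2 \<ge> 0" using r1 r2 d by simp_all
      ultimately have "d1 * r1 = 0" "d2 * r2 = 0" by linarith+
      then have "r1 = 0" "r2 = 0" using d by auto
      then show "aV P m = 0" "bV P m = 0" using r1 r2 ip_self_pos by auto
    qed
  qed
  then have "\<forall>m. \<exists>e. e \<ge> 0 \<and> E m = complex_of_real e \<and> (e = 0 \<longrightarrow> aV P m = 0 \<and> bV P m = 0)" by blast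
  then obtain e where "\<forall>m. e m \<ge> 0 \<and> E m = complex_of_real (e m) \<and> (e m = 0 \<longrightarrow> aV P m = 0 \<and> bV P m = 0)"
    using choice[of "\<lambda>m e. e \<ge> 0 \<and> E m = complex_of_real e \<and> (e = 0 \<longrightarrow> aV P m = 0 \<and> bV P m = 0)"] by blast
  then have e: "\<And>m. e m \<ge> 0" "\<And>m. E m = complex_of_real (e m)"
      "\<And>m. e m = 0 \<Longrightarrow> aV P m = 0 \<and> bV P m = 0" by auto
  have "complex_of_real (\<Sum>m<k. e m) = 0" using Es e(2) by simp
  then have "(\<Sum>m<k. e m) = 0" by (simp only: of_real_eq_0_iff)
  then have "\<forall>m\<in>{..<k}. e m = 0" using e(1) by (simp add: sum_nonneg_eq_0_iff)
  then have ab0: "aV P m = 0" "bV P m = 0" if "m < k" for m using e(3) that by auto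
  have snd0: "snd (P c) = 0" if c: "c < 2*k" for c
  proof -
    obtain m where m: "m < k" and cm: "c = 2*m \<or> c = 2*m+1"
    proof
      show "c div 2 < k" using c by auto
      show "c = 2 * (c div 2) \<or> c = 2 * (c div 2) + 1" by presburger
    qed
    have z: "Tw (aV P m) = Tw 0" "Tw (bV P m) = Tw 0" using ab0[OF m] by auto
    have Tw0: "Tw 0 i t = 0" for i t
    proof -
      have "(Lv ^^ i) 0 = 0" by (induction i) (simp_all add: Lv_def zero_prod_def)
      then show ?thesis by (simp add: Tw_def ev_def zero_prod_def)
    qed
    have "Dl (Tw (P c)) 0 0 = 0"
      using cm
    proof
      assume h: "c = 2*m"
      have "Dl (Tw (P (2*m))) 0 0 = Op dzb1 (\<lambda>i t. Op dz1 (Tw (P (2*m))) i t - Op dzb0 (Tw (P (2*m+1))) i t) 0 0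
          + Op dzb0 (\<lambda>i t. Op dz0 (Tw (P (2*m))) i t + Op dzb1 (Tw (P (2*m+1))) i t) 0 0"
        by (rule Dl_x[symmetric])
      also have "\<dots> = 0" unfolding Tw_Op Tw_diff[symmetric] Tw_add[symmetric] aV_def[symmetric] bV_def[symmetric]
        by (simp add: ab0[OF m] OpV_zero Tw0)
      finally show ?thesis using h by simp
    next
      assume h: "c = 2*m+1"
      have "Dl (Tw (P (2*m+1))) 0 0 = - Op dz0 (\<lambda>i t. Op dz1 (Tw (P (2*m))) i t - Op dzb0 (Tw (P (2*m+1))) i t) 0 0
          + Op dz1 (\<lambda>i t. Op dz0 (Tw (P (2*m))) i t + Op dzb1 (Tw (P (2*m+1))) i t) 0 0"
        by (rule Dl_y[symmetric])
      also have "\<dots> = 0" unfolding Tw_Op Tw_diff[symmetric] Tw_add[symmetric] aV_def[symmetric] bV_def[symmetric]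
        by (simp add: ab0[OF m] OpV_zero Tw0)
      finally show ?thesis using h by simp
    qed
    then have "- 2 * SS * snd (P c) = 0"
      by (simp add: Dl_def Tw_def ev_def Lv_def SS_def algebra_simps power2_eq_square)
    then show ?thesis by simp
  qed
  have fa: "fst (aV P m) = (zx dz1 - SS * zn dz1) * fst (P (2*m)) - (zx dzb0 - SS * zn dzb0) * fst (P (2*m+1))"
       "fst (bV P m) = (zx dz0 - SS * zn dz0) * fst (P (2*m)) + (zx dzb1 - SS * zn dzb1) * fst (P (2*m+1))"
    if "m < k" for m
    using snd0[of "2*m"] snd0[of "2*m+1"] that by (simp_all add: aV_def bV_def fst_OpV algebra_simps)
  have X: "fst (P (2*m)) = 0 \<and> fst (P (2*m+1)) = 0" if m: "m < k" for m
  proof (rule chain_lemma[where X = "\<lambda>m. fst (P (2*m))" and Y = "\<lambda>m. fst (P (2*m+1))" and k = k,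
        OF _ zeta_nz _ _ _ _ k m])
    show "(zx dz1 - SS * zn dz1) * fst (P (2*m)) - (zx dzb0 - SS * zn dzb0) * fst (P (2*m+1)) = 0 \<and>
          (zx dz0 - SS * zn dz0) * fst (P (2*m)) + (zx dzb1 - SS * zn dzb1) * fst (P (2*m+1)) = 0"
      if "m < k" for m using ab0[OF that] fa[OF that] by (simp add: zero_prod_def)
    show "zn dz1 * zn dzb1 + zn dz0 * zn dzb0 = 1" using K3 by (simp add: algebra_simps)
    show "zn dz1 * fst (P (2*0)) - zn dzb0 * fst (P (2*0+1)) = 0" using bc1[of 0] k by (simp add: an_def)
    show "zn dz1 * fst (P (2*(m+1))) - zn dzb0 * fst (P (2*(m+1)+1)) + (zn dz0 * fst (P (2*m)) + zn dzb1 * fst (P (2*m+1))) = 0"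
      if "m + 1 < k" for m using bc1[of "m+1"] that by (simp add: an_def bn_def)
    show "zn dz0 * fst (P (2*(k-1))) + zn dzb1 * fst (P (2*(k-1)+1)) = 0" using bc1[of k] k by (simp add: bn_def)
  qed
  fix c assume c: "c < 2*k"
  obtain m where m: "m < k" and cm: "c = 2*m \<or> c = 2*m+1"
  proof
    show "c div 2 < k" using c by auto
    show "c = 2 * (c div 2) \<or> c = 2 * (c div 2) + 1" by presburger
  qed
  have "fst (P c) = 0" using X[OF m] cm by auto
  then show "P c = 0" using snd0[OF c] by (simp add: prod_eq_iff)
qed

lemma alT_gen:
  assumes FT: "\<And>c i t. c < 2*k \<Longrightarrow> t \<ge> 0 \<Longrightarrow> F c i t = Tw (P c) i t" and "m < k" "t \<ge> 0"
  shows "al F m i t = Tw (aV P m) i t" "be F m i t = Tw (bV P m) i t"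
  using assms by (simp_all add: al_def be_def aV_def bV_def Op_def FT Tw_diff Tw_add Tw_Op[symmetric])

lemma symb_sum: "(\<Sum>c<p. symb A n r c * w c) = (\<Sum>c<p. \<Sum>j<4. A j r c * (nv j * w c))"
  unfolding symb_def nv_def by (simp add: sum_distrib_right mult.assoc)

lemma Yc_nv: "Yc cf (\<lambda>j c. nv j * w c) c = zn cf * w c"
  by (simp add: Yc_def zn_def sum_distrib_right mult.assoc mult.left_commute)

lemma main_ctx:
  fixes k :: nat and u :: "nat \<Rightarrow> real \<Rightarrow> complex"
  assumes k: "k \<ge> 1"
   and sm: "\<forall>c<2*k. smooth_halfline (u c)"
   and bd: "\<forall>c<2*k. bounded (u c ` {0..})"
   and bx: "\<forall>r<2*k. \<forall>t\<ge>0. box1 k PP u r t = 0"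
   and b1: "\<forall>r<k+1. (\<Sum>c<2*k. symb (adj (D0 k)) n r c * u c 0) = 0"
   and b2: "\<forall>r<2*k. (\<Sum>c<k-1. symb (adj (D1 k)) n r c * apply_op (D1 k) (2*k) PP u c 0) = 0"
  shows "\<forall>c<2*k. \<forall>t\<ge>0. u c t = 0"
proof -
  have "\<forall>c. \<exists>G. c < 2*k \<longrightarrow> tower G \<and> (\<forall>t\<ge>0. G 0 t = u c t)"
  proof
    fix c show "\<exists>G. c < 2*k \<longrightarrow> tower G \<and> (\<forall>t\<ge>0. G 0 t = u c t)"
    proof (cases "c < 2*k")
      case True
      then obtain G where "\<forall>t\<ge>0. G 0 t = u c t"
          "\<forall>m t. 0 \<le> t \<longrightarrow> (G m has_vector_derivative G (Suc m) t) (at t within {0..})"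
        using sm unfolding smooth_halfline_def by blast
      then show ?thesis by (auto simp: tower_def)
    qed simp
  qed
  then obtain F where "\<forall>c. c < 2*k \<longrightarrow> tower (F c) \<and> (\<forall>t\<ge>0. F c 0 t = u c t)"
    using choice[of "\<lambda>c G. c < 2*k \<longrightarrow> tower G \<and> (\<forall>t\<ge>0. G 0 t = u c t)"] by blast
  then have F: "\<And>c. c < 2*k \<Longrightarrow> tower (F c)" "\<And>c t. c < 2*k \<Longrightarrow> t \<ge> 0 \<Longrightarrow> F c 0 t = u c t"
    by auto
  have uF: "\<And>c t. c < 2*k \<Longrightarrow> t \<ge> 0 \<Longrightarrow> u c t = F c 0 t" using F(2) by simp
  have R0: "Rt k F r 0 t = 0" if "r < 2*k" "t \<ge> 0" for r t
    using box_eval[where F=F and u=u and k=k and r=r and t=t, OF F(1) uF that(2)] bx that by (simp add: Rt_def)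
  have bdF: "bounded (F c 0 ` {0..})" if "c < 2*k" for c
  proof -
    have "F c 0 ` {0..} = u c ` {0..}" using F(2)[OF that] by (auto intro!: image_cong)
    then show ?thesis using bd that by simp
  qed
  have "\<forall>c. \<exists>p. c < 2*k \<longrightarrow> (\<forall>t\<ge>0. F c 0 t = ev p t)"
  proof
    fix c
    show "\<exists>p. c < 2*k \<longrightarrow> (\<forall>t\<ge>0. F c 0 t = ev p t)"
    proof (cases "c < 2*k")
      case True
      then obtain a b where "\<forall>t\<ge>0. F c 0 t = (a + b * of_real t) * EE (-s) t"
        using stage1[OF F(1) R0 bdF] by blast
      then show ?thesis by (intro exI[of _ "(a,b)"]) (simp add: ev_def)
    qed simp
  qed
  then obtain P where "\<forall>c. c < 2*k \<longrightarrow> (\<forall>t\<ge>0. F c 0 t = ev (P c) t)"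
    using choice[of "\<lambda>c p. c < 2*k \<longrightarrow> (\<forall>t\<ge>0. F c 0 t = ev p t)"] by blast
  then have P: "\<And>c t. c < 2*k \<Longrightarrow> t \<ge> 0 \<Longrightarrow> F c 0 t = ev (P c) t" by auto
  have FT: "F c i t = Tw (P c) i t" if "c < 2*k" "t \<ge> 0" for c i t
    by (rule tower_eq[OF F(1)[OF that(1)] Tw_tower]) (use P that in \<open>auto simp: Tw_0\<close>)
  have u0: "u c 0 = fst (P c)" if "c < 2*k" for c
    using uF[OF that, of 0] P[OF that, of 0] by (simp add: ev_def)
  have bc1: "(if r < k then an P r else 0) + (if 1 \<le> r then bn P (r-1) else 0) = 0" if r: "r \<le> k" for r
  proof -
    have "(\<Sum>c<2*k. symb (adj (D0 k)) n r c * u c 0) = 0" using b1 r by auto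
    then have "(if r < k then zn dz1 * u (2*r) 0 - zn dzb0 * u (2*r+1) 0 else 0)
       + (if 1 \<le> r then zn dz0 * u (2*r-2) 0 + zn dzb1 * u (2*r-1) 0 else 0) = 0"
      unfolding symb_sum C_adjD0[OF r] Yc_nv .
    moreover have "1 \<le> r \<Longrightarrow> 2*r-2 = 2*(r-1) \<and> 2*r-1 = 2*(r-1)+1" by auto
    ultimately show ?thesis using r by (auto simp: an_def bn_def u0 split: if_splits)
  qed
  define W where "W q = apply_op (D1 k) (2*k) PP u q 0" for q
  have Wq: "W q = fst (aV P (q+1)) - fst (bV P q)" if "q + 2 \<le> k" for q
  proof -
    have "W q = opT (D1 k) (2*k) F q 0 0" unfolding W_def by (rule apply_eval[OF F(1) uF]) auto
    also have "\<dots> = al F (q+1) 0 0 - be F q 0 0" by (rule X_eval[OF that])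
    also have "\<dots> = fst (aV P (q+1)) - fst (bV P q)"
      using that by (simp add: alT_gen[OF FT] Tw_0 ev_def)
    finally show ?thesis .
  qed
  have Weq: "(if m + 2 \<le> k then zn dzb0 * W m else 0) - (if 1 \<le> m then zn dzb1 * W (m-1) else 0) = 0"
            "(if m + 2 \<le> k then zn dz1 * W m else 0) + (if 1 \<le> m then zn dz0 * W (m-1) else 0) = 0"
    if m: "m < k" for m
  proof -
    have "(\<Sum>q<k-1. symb (adj (D1 k)) n (2*m) q * W q) = 0"
         "(\<Sum>q<k-1. symb (adj (D1 k)) n (2*m+1) q * W q) = 0"
      using b2 m unfolding W_def by auto
    then show "(if m + 2 \<le> k then zn dzb0 * W m else 0) - (if 1 \<le> m then zn dzb1 * W (m-1) else 0) = 0"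
              "(if m + 2 \<le> k then zn dz1 * W m else 0) + (if 1 \<le> m then zn dz0 * W (m-1) else 0) = 0"
      unfolding symb_sum C_adjD1_even[OF m] C_adjD1_odd[OF m] Yc_nv by simp_all
  qed
  have nz: "\<not> (zn dzb0 = 0 \<and> zn dz1 = 0)" using K3 by auto
  have W0: "W m = 0" if "m + 2 \<le> k" for m
    using that
  proof (induction m)
    case 0
    then have "zn dzb0 * W 0 = 0" "zn dz1 * W 0 = 0" using Weq[of 0] by auto
    then show ?case using nz by auto
  next
    case (Suc m)
    then have "zn dzb0 * W (Suc m) = 0" "zn dz1 * W (Suc m) = 0" using Weq[of "Suc m"] by auto
    then show ?case using nz by auto
  qed
  have bc2: "fst (aV P (m+1)) = fst (bV P m)" if "m + 2 \<le> k" for m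
    using W0[OF that] Wq[OF that] by simp
  have P0: "P c = 0" if "c < 2*k" for c
    by (rule stage2[OF FT R0 bc1 bc2 k]) (use that in auto)
  show ?thesis using uF FT P0 by (simp add: Tw_0 ev_def zero_prod_def)
qed
end


theorem mainTheorem7:
  fixes k :: nat and \<Omega> :: "(real^4) set" and \<nu> :: "real^4 \<Rightarrow> real^4"
  assumes "k \<ge> 3"
    and "open \<Omega>" and "connected \<Omega>" and "\<Omega> \<noteq> {}"
    and "\<forall>x\<in>frontier \<Omega>. norm (\<nu> x) = 1"
  shows "SL_regular k \<Omega> \<nu>"
  unfolding SL_regular_def Let_def
proof (intro ballI allI impI)
  fix x \<xi> u and c :: nat and t :: real
  assume x: "x \<in> frontier \<Omega>"
  assume h: "\<xi> \<noteq> 0 \<and> \<xi> \<bullet> \<nu> x = 0"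
  assume hu: "(\<forall>c<2 * k. smooth_halfline (u c)) \<and>
       (\<forall>c<2 * k. bounded (u c ` {0..})) \<and>
       (\<forall>r<2 * k. \<forall>t\<ge>0. box1 k (subst_deriv \<xi> (- \<nu> x)) u r t = 0) \<and>
       (\<forall>r<k + 1. (\<Sum>c<2 * k. symb (adj (D0 k)) (- \<nu> x) r c * u c 0) = 0) \<and>
       (\<forall>r<2 * k. (\<Sum>c<k - 1. symb (adj (D1 k)) (- \<nu> x) r c *
                   apply_op (D1 k) (2 * k) (subst_deriv \<xi> (- \<nu> x)) u c 0) = 0)"
  define nn where "nn = - \<nu> x"
  have n1: "norm nn = 1" using assms(5) x by (simp add: nn_def)
  have c: "ctx \<xi> nn (norm \<xi>)"
  proof
    show "norm \<xi> > 0" using h by simp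
    show "(\<Sum>j<4. cmp nn j * cmp nn j) = 1"
      using n1 by (simp add: cmp_inner[symmetric] norm_eq_sqrt_inner)
    show "(\<Sum>j<4. cmp \<xi> j * cmp nn j) = 0"
      using h by (simp add: cmp_inner[symmetric] nn_def)
    show "(\<Sum>j<4. cmp \<xi> j * cmp \<xi> j) = (norm \<xi>)^2"
      by (simp add: cmp_inner[symmetric] power2_norm_eq_inner)
  qed
  have k1: "k \<ge> 1" using assms(1) by simp
  assume ct: "c < 2 * k" "0 \<le> t"
  show "u c t = 0"
    using ctx.main_ctx[OF c k1] hu ct unfolding nn_def by blast
qed

end
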